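(* For each $\gamma>0$ let $\mu^\gamma$ be a solution with sufficient regularity on $[0,T]$ of the kinetic Vlasov--Fokker--Planck equation with parameter $\gamma$, and assume $c_0:=\sup_{\gamma>0}\sup_{t\in[0,T]}\|\nabla K\star\rho_t^\gamma\|_{L^\infty}<\infty$, where $\rho_t^\gamma=\pi^x_\#\mu_t^\gamma$. Then for any $p\in[2,\infty)$, with $u_t^\gamma:=\mu_t^\gamma e^H$ (the density of $\mu_t^\gamma$ with respect to $\eta$), \[\|u_t^\gamma\|^p_{L^p(\eta)}\le\|u_0^\gamma\|^p_{L^p(\eta)}+\frac{p(p-1)c_0^2}2\int_0^t\|u_r^\gamma\|^p_{L^p(\eta)}dr\quad\text{for all }t\in[0,T].\] In particular, $\|\mu_t^\gamma\|_{L^p_H}\le\|\mu_0^\gamma\|_{L^p_H}e^{c_0^2(p-1)t/2}$ for all $t\in[0,T]$.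
   Context: Standing assumptions on $\Phi:\mathbb{R}^d\to[0,\infty)$: locally Lipschitz; $|\nabla\Phi(x)|\le c_\Phi(1+|x|)$ and $\nabla\Phi$ Lipschitz with constant $\le c_\Phi$; $\sup_x|\nabla\Phi|^re^{-\Phi}<\infty$ for all $r\in[1,\infty)$. $H(x,v)=\Phi(x)+|v|^2/2$; $\|\mu\|_{L^p_H}=(\iint|\mu|^pe^{(p-1)H}dxdv)^{1/p}$; $\eta(dxdv)=e^{-\Phi(x)}dx\,\mathscr{N}^d(dv)$ with $\mathscr{N}^d$ the standard Gaussian. $\mathsf{F}(x,\rho)=-\nabla\Phi(x)-(\nabla K\star\rho)(x)$. Kinetic equation: $\partial_t\mu_t+\gamma v\cdot\nabla_x\mu_t+\gamma\nabla_v\cdot(\mu_t(\mathsf{F}(x,\rho_t)-\gamma v))=\gamma^2\Delta_v\mu_t$, $\rho_t=\pi^x_\#\mu_t$. *)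

theory Defs
  imports "HOL-Analysis.Analysis"
begin

text \<open>Phase space: position x and velocity v both live in R^d, modelled by a
  Euclidean space 'a with DIM('a) = d.  A time-dependent phase-space density is
  a function  m :: real => 'a => 'a => real,  m t x v.\<close>

definition Ham :: "('a::euclidean_space \<Rightarrow> real) \<Rightarrow> 'a \<Rightarrow> 'a \<Rightarrow> real" where
  "Ham \<Phi> x v = \<Phi> x + (norm v)\<^sup>2 / 2"

definition eta :: "('a::euclidean_space \<Rightarrow> real) \<Rightarrow> ('a \<times> 'a) measure" where
  "eta \<Phi> = density lborel (\<lambda>(x,v). ennreal (exp (- \<Phi> x) *
      ((2 * pi) powr (- real DIM('a) / 2) * exp (- (norm v)\<^sup>2 / 2))))"

definition Lp_eta_pow :: "('a::euclidean_space \<Rightarrow> real) \<Rightarrow> real \<Rightarrow> ('a \<Rightarrow> 'a \<Rightarrow> real) \<Rightarrow> ennreal" where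
  "Lp_eta_pow \<Phi> p u = (\<integral>\<^sup>+ z. ennreal (\<bar>u (fst z) (snd z)\<bar> powr p) \<partial>(eta \<Phi>))"

definition LpH_norm :: "('a::euclidean_space \<Rightarrow> real) \<Rightarrow> real \<Rightarrow> ('a \<Rightarrow> 'a \<Rightarrow> real) \<Rightarrow> real" where
  "LpH_norm \<Phi> p m = (\<integral> z. \<bar>m (fst z) (snd z)\<bar> powr p * exp ((p - 1) * Ham \<Phi> (fst z) (snd z)) \<partial>lborel) powr (1 / p)"

definition xmarg :: "('a::euclidean_space \<Rightarrow> 'a \<Rightarrow> real) \<Rightarrow> 'a \<Rightarrow> real" where
  "xmarg m x = (\<integral> v. m x v \<partial>lborel)"

definition conv_field :: "('a::euclidean_space \<Rightarrow> 'a) \<Rightarrow> ('a \<Rightarrow> real) \<Rightarrow> 'a \<Rightarrow> 'a" where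
  "conv_field gK \<rho> x = (\<integral> y. \<rho> y *\<^sub>R gK (x - y) \<partial>lborel)"

definition force :: "('a::euclidean_space \<Rightarrow> 'a) \<Rightarrow> ('a \<Rightarrow> 'a) \<Rightarrow> ('a \<Rightarrow> real) \<Rightarrow> 'a \<Rightarrow> 'a" where
  "force gPhi gK \<rho> x = - gPhi x - conv_field gK \<rho> x"

text \<open>A sufficiently regular (classical) solution on [0,T] of the kinetic
  Vlasov--Fokker--Planck equation with parameter gamma:
    d_t mu + gamma v.grad_x mu + gamma div_v(mu (F(x,rho_t) - gamma v)) = gamma^2 Lap_v mu.
  mt, mx, mv, mvv are the time derivative, x-gradient, v-gradient and v-Hessian
  (as a linear map).  The divergence is written out:
    div_v(mu (F - gamma v)) = (F - gamma v).grad_v mu - gamma d mu.\<close>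
definition regular_VFP_solution ::
  "('a::euclidean_space \<Rightarrow> real) \<Rightarrow> ('a \<Rightarrow> 'a) \<Rightarrow> ('a \<Rightarrow> 'a) \<Rightarrow> real \<Rightarrow> real
    \<Rightarrow> (real \<Rightarrow> 'a \<Rightarrow> 'a \<Rightarrow> real) \<Rightarrow> bool" where
  "regular_VFP_solution \<Phi> gPhi gK \<gamma> T m \<longleftrightarrow>
    (\<exists>mt mx mv mvv.
      (\<forall>t\<in>{0..T}. \<forall>x v. m t x v \<ge> 0) \<and>
      (\<forall>t\<in>{0..T}. integrable lborel (\<lambda>z::'a\<times>'a. m t (fst z) (snd z)) \<and>
                   (\<integral> z. m t (fst z) (snd z) \<partial>lborel) = 1) \<and>
      (\<forall>t\<in>{0..T}. \<forall>x v. ((\<lambda>s. m s x v) has_real_derivative mt t x v) (at t within {0..T})) \<and>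
      (\<forall>t\<in>{0..T}. \<forall>x v. ((\<lambda>y. m t y v) has_derivative (\<lambda>h. mx t x v \<bullet> h)) (at x)) \<and>
      (\<forall>t\<in>{0..T}. \<forall>x v. ((\<lambda>w. m t x w) has_derivative (\<lambda>h. mv t x v \<bullet> h)) (at v)) \<and>
      (\<forall>t\<in>{0..T}. \<forall>x v. ((\<lambda>w. mv t x w) has_derivative mvv t x v) (at v)) \<and>
      continuous_on ({0..T} \<times> UNIV) (\<lambda>(t,x,v). m t x v) \<and>
      continuous_on ({0..T} \<times> UNIV) (\<lambda>(t,x,v). mt t x v) \<and>
      continuous_on ({0..T} \<times> UNIV) (\<lambda>(t,x,v). mx t x v) \<and>
      continuous_on ({0..T} \<times> UNIV) (\<lambda>(t,x,v). mv t x v) \<and>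
      (\<forall>b. continuous_on ({0..T} \<times> UNIV) (\<lambda>(t,x,v). mvv t x v b)) \<and>
      (\<forall>q\<ge>1. \<forall>k::nat. \<exists>g::'a\<times>'a\<Rightarrow>real. integrable lborel g \<and>
         (\<forall>t\<in>{0..T}. \<forall>x v.
            (1 + norm x + norm v) ^ k *
            (\<bar>m t x v\<bar> + \<bar>mt t x v\<bar> + norm (mx t x v) + norm (mv t x v)
               + (\<Sum>b\<in>Basis. norm (mvv t x v b))) powr q
            * exp ((q - 1) * Ham \<Phi> x v) \<le> g (x, v))) \<and>
      (\<forall>t\<in>{0..T}. \<forall>x v.
         mt t x v + \<gamma> * (v \<bullet> mx t x v)
         + \<gamma> * ((force gPhi gK (xmarg (m t)) x - \<gamma> *\<^sub>R v) \<bullet> mv t x v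
                 - \<gamma> * real DIM('a) * m t x v)
         = \<gamma>\<^sup>2 * (\<Sum>b\<in>Basis. mvv t x v b \<bullet> b)))"

end

theory Submission
  imports Defs
begin

lemma ibp_line:
  fixes f df :: "'b::euclidean_space \<Rightarrow> real" and e :: 'b
  assumes f: "integrable lborel f" and df: "integrable lborel df"
    and deriv: "\<And>z s. ((\<lambda>s. f (z + s *\<^sub>R e)) has_real_derivative df (z + s *\<^sub>R e)) (at s)"
    and cont: "\<And>z. continuous_on UNIV (\<lambda>s. df (z + s *\<^sub>R e))"
  shows "integral\<^sup>L lborel df = 0"
proof -
  have dfm[measurable]: "df \<in> borel_measurable borel"
    using borel_measurable_integrable[OF df] by (simp add: measurable_lborel1)
  have fm[measurable]: "f \<in> borel_measurable borel"
    using borel_measurable_integrable[OF f] by (simp add: measurable_lborel1)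
  have tr: "\<And>g::'b\<Rightarrow>real. g \<in> borel_measurable borel \<Longrightarrow> integral\<^sup>L lborel (\<lambda>z. g (z + c)) = integral\<^sup>L lborel g" for c :: 'b
  proof -
    fix g :: "'b\<Rightarrow>real" assume [measurable]: "g \<in> borel_measurable borel"
    have "integral\<^sup>L lborel g = integral\<^sup>L (distr lborel borel ((+) c)) g"
      by (simp add: lborel_distr_plus)
    also have "\<dots> = integral\<^sup>L lborel (\<lambda>z. g (c + z))"
      by (rule integral_distr) auto
    finally show "integral\<^sup>L lborel (\<lambda>z. g (z + c)) = integral\<^sup>L lborel g" by (simp add: add.commute)
  qed
  have tri: "\<And>g::'b\<Rightarrow>real. integrable lborel g \<Longrightarrow> integrable lborel (\<lambda>z. g (z + c))" for c :: 'b
  proof -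
    fix g :: "'b\<Rightarrow>real" assume g: "integrable lborel g"
    then have [measurable]: "g \<in> borel_measurable borel"
      using borel_measurable_integrable[OF g] by (simp add: measurable_lborel1)
    have "integrable (distr lborel borel ((+) c)) g" using g by (simp add: lborel_distr_plus)
    then have "integrable lborel (\<lambda>z. g (c + z))"
      by (subst (asm) integrable_distr_eq) auto
    then show "integrable lborel (\<lambda>z. g (z + c))" by (simp add: add.commute)
  qed
  have ftc: "f (z + e) - f z = (\<integral>s. indicator {0..1} s * df (z + s *\<^sub>R e) \<partial>lborel)" for z
  proof -
    have "(LBINT s=ereal 0..ereal 1. df (z + s *\<^sub>R e)) = f (z + 1 *\<^sub>R e) - f (z + 0 *\<^sub>R e)"
      apply (rule interval_integral_FTC_finite[where F="\<lambda>s. f (z + s *\<^sub>R e)" and f="\<lambda>s. df (z + s *\<^sub>R e)" and a=0 and b=1])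
      using cont[of z] apply (rule continuous_on_subset) apply simp
      using deriv[of z] by (simp add: has_real_derivative_iff_has_vector_derivative[symmetric] has_field_derivative_at_within)
    then show ?thesis by (simp add: interval_integral_Icc set_lebesgue_integral_def)
  qed
  define h where "h = (\<lambda>(s::real, z::'b). indicator {0..1} s * df (z + s *\<^sub>R e))"
  have hm[measurable]: "h \<in> borel_measurable (lborel \<Otimes>\<^sub>M lborel)"
    unfolding h_def by measurable
  have PS: "pair_sigma_finite (lborel :: real measure) (lborel :: 'b measure)"
    by (rule pair_sigma_finite.intro) (rule sigma_finite_lborel)+
  have hint: "integrable (lborel \<Otimes>\<^sub>M lborel) h"
  proof (rule pair_sigma_finite.Fubini_integrable[OF PS])
    have "(\<lambda>s. \<integral>z. norm (h (s, z)) \<partial>lborel) = (\<lambda>s. indicator {0..1} s * (\<integral>z. norm (df z) \<partial>lborel))"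
      using tr[where g="\<lambda>z. \<bar>df z\<bar>"] by (auto simp: h_def abs_mult indicator_def fun_eq_iff)
    moreover have "integrable lborel (\<lambda>s::real. indicator {0..1} s * (\<integral>z. norm (df z) \<partial>lborel))"
      by (intro integrable_mult_left) simp
    ultimately show "integrable lborel (\<lambda>s. \<integral>z. norm (h (s, z)) \<partial>lborel)" by simp
    show "AE s in lborel. integrable lborel (\<lambda>z. h (s, z))"
      by (auto simp: h_def intro!: integrable_mult_right tri df)
  qed (fact hm)
  have "(\<integral>s. (\<integral>z. h (s, z) \<partial>lborel) \<partial>lborel) = (\<integral>z. (\<integral>s. h (s, z) \<partial>lborel) \<partial>lborel)"
    using pair_sigma_finite.Fubini_integral[OF PS, of "\<lambda>s z. h (s, z)"] hint by simp
  moreover have "(\<lambda>s. \<integral>z. h (s, z) \<partial>lborel) = (\<lambda>s. indicator {0..1} s * integral\<^sup>L lborel df)"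
    by (auto simp: h_def tr fun_eq_iff)
  moreover have "(\<lambda>z. \<integral>s. h (s, z) \<partial>lborel) = (\<lambda>z. f (z + e) - f z)"
    by (auto simp: h_def ftc fun_eq_iff)
  moreover have "(\<integral>z. f (z + e) - f z \<partial>lborel) = 0"
    using tr[OF fm, of e] by (simp add: tri f)
  ultimately show ?thesis by simp
qed


lemma powr_deriv_gt1:
  fixes g :: "real \<Rightarrow> real"
  assumes g: "(g has_real_derivative g') (at t within S)"
    and nn: "\<forall>s\<in>S. g s \<ge> 0" and tS: "t \<in> S" and q: "q > 1"
  shows "((\<lambda>s. g s powr q) has_real_derivative (q * g t powr (q - 1) * g')) (at t within S)"
proof (cases "g t > 0")
  case True
  show ?thesis
    using DERIV_chain2[OF has_real_derivative_powr[OF True, of q] g] by (simp add: mult.assoc)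
next
  case False
  then have gt: "g t = 0" using nn tS by force
  have c: "(g \<longlongrightarrow> 0) (at t within S)"
    using DERIV_continuous[OF g] gt by (simp add: continuous_within)
  have lim: "((\<lambda>y. (g y - g t) / (y - t) * g y powr (q - 1)) \<longlongrightarrow> g' * 0) (at t within S)"
  proof (rule tendsto_mult)
    show "((\<lambda>y. (g y - g t) / (y - t)) \<longlongrightarrow> g') (at t within S)"
      using g by (simp add: has_field_derivative_iff)
    show "((\<lambda>y. g y powr (q - 1)) \<longlongrightarrow> 0) (at t within S)"
      by (rule tendsto_zero_powrI[OF c tendsto_const]) (auto simp: q eventually_at_filter nn)
  qed
  have ev: "\<forall>\<^sub>F y in at t within S. (g y - g t) / (y - t) * g y powr (q - 1) = (g y powr q - g t powr q) / (y - t)"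
    unfolding eventually_at_filter
  proof (intro always_eventually allI impI)
    fix y assume "y \<noteq> t" "y \<in> S"
    then have "g y \<ge> 0" using nn by auto
    then have "g y * g y powr (q - 1) = g y powr q"
      by (cases "g y = 0") (auto simp: powr_mult_base)
    then show "(g y - g t) / (y - t) * g y powr (q - 1) = (g y powr q - g t powr q) / (y - t)"
      using gt q by (simp add: powr_add)
  qed
  show ?thesis
    unfolding has_field_derivative_iff using gt tendsto_cong[OF ev] lim by simp
qed

lemma powr_deriv_ge1:
  fixes g :: "real \<Rightarrow> real"
  assumes g: "(g has_real_derivative g') (at t)"
    and nn: "\<forall>s. g s \<ge> 0" and q: "q \<ge> 1"
  shows "((\<lambda>s. g s powr q) has_real_derivative (q * (if q = 1 then 1 else g t powr (q - 1)) * g')) (at t)"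
proof (cases "q = 1")
  case True
  have "(\<lambda>s. g s powr q) = g" using nn True by (auto simp: fun_eq_iff)
  then show ?thesis using True g by simp
next
  case False
  then show ?thesis using powr_deriv_gt1[of g g' t UNIV q] g nn q by simp
qed


lemma ibp_x:
  fixes F dF :: "'a::euclidean_space \<Rightarrow> 'b::euclidean_space \<Rightarrow> real" and i :: 'a
  assumes "integrable lborel (\<lambda>z. F (fst z) (snd z))" "integrable lborel (\<lambda>z. dF (fst z) (snd z))"
    and "\<And>x v s. ((\<lambda>s. F (x + s *\<^sub>R i) v) has_real_derivative dF (x + s *\<^sub>R i) v) (at s)"
    and "\<And>x v. continuous_on UNIV (\<lambda>s. dF (x + s *\<^sub>R i) v)"
  shows "(\<integral>z. dF (fst z) (snd z) \<partial>lborel) = 0"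
  by (rule ibp_line[where f="\<lambda>z. F (fst z) (snd z)" and e="(i, 0)"]) (use assms in auto)

lemma ibp_v:
  fixes F dF :: "'a::euclidean_space \<Rightarrow> 'b::euclidean_space \<Rightarrow> real" and i :: 'b
  assumes "integrable lborel (\<lambda>z. F (fst z) (snd z))" "integrable lborel (\<lambda>z. dF (fst z) (snd z))"
    and "\<And>x v s. ((\<lambda>s. F x (v + s *\<^sub>R i)) has_real_derivative dF x (v + s *\<^sub>R i)) (at s)"
    and "\<And>x v. continuous_on UNIV (\<lambda>s. dF x (v + s *\<^sub>R i))"
  shows "(\<integral>z. dF (fst z) (snd z) \<partial>lborel) = 0"
  by (rule ibp_line[where f="\<lambda>z. F (fst z) (snd z)" and e="(0, i)"]) (use assms in auto)

lemma line_deriv: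
  fixes f :: "'a::euclidean_space \<Rightarrow> real"
  assumes "(f has_derivative (\<lambda>h. D \<bullet> h)) (at (x + s *\<^sub>R i))"
  shows "((\<lambda>s. f (x + s *\<^sub>R i)) has_real_derivative D \<bullet> i) (at s)"
proof -
  have l: "((\<lambda>s. x + s *\<^sub>R i) has_derivative (\<lambda>h. h *\<^sub>R i)) (at s)"
    by (auto intro!: derivative_eq_intros)
  have "((\<lambda>s. f (x + s *\<^sub>R i)) has_derivative (\<lambda>h. D \<bullet> (h *\<^sub>R i))) (at s)"
    using has_derivative_compose[OF l assms] .
  moreover have "(\<lambda>h. D \<bullet> (h *\<^sub>R i)) = (*) (D \<bullet> i)" by (auto simp: fun_eq_iff)
  ultimately show ?thesis by (simp add: has_field_derivative_def)
qed

lemma line_deriv_lin: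
  fixes f :: "'a::euclidean_space \<Rightarrow> 'a"
  assumes "(f has_derivative f') (at (x + s *\<^sub>R i))"
  shows "((\<lambda>s. f (x + s *\<^sub>R i) \<bullet> j) has_real_derivative f' i \<bullet> j) (at s)"
proof -
  have l: "((\<lambda>s. x + s *\<^sub>R i) has_derivative (\<lambda>h. h *\<^sub>R i)) (at s)"
    by (auto intro!: derivative_eq_intros)
  have "((\<lambda>s. f (x + s *\<^sub>R i)) has_derivative (\<lambda>h. f' (h *\<^sub>R i))) (at s)"
    using has_derivative_compose[OF l assms] .
  then have "((\<lambda>s. f (x + s *\<^sub>R i) \<bullet> j) has_derivative (\<lambda>h. f' (h *\<^sub>R i) \<bullet> j)) (at s)"
    by (auto intro!: derivative_eq_intros)
  moreover have "(\<lambda>h. f' (h *\<^sub>R i) \<bullet> j) = (*) (f' i \<bullet> j)"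
    using linear_cmul[OF has_derivative_linear[OF assms]] by (auto simp: fun_eq_iff)
  ultimately show ?thesis by (simp add: has_field_derivative_def)
qed

lemma cont_line_x:
  fixes G :: "'a::euclidean_space \<Rightarrow> 'b::euclidean_space \<Rightarrow> real"
  assumes "continuous_on UNIV (\<lambda>z. G (fst z) (snd z))"
  shows "continuous_on UNIV (\<lambda>s. G (x + s *\<^sub>R i) v)"
proof -
  have "continuous_on UNIV ((\<lambda>z. G (fst z) (snd z)) \<circ> (\<lambda>s. (x + s *\<^sub>R i, v)))"
    by (rule continuous_on_compose[OF _ continuous_on_subset[OF assms]]) (auto intro!: continuous_intros)
  then show ?thesis by (simp add: o_def)
qed

lemma cont_line_v:
  fixes G :: "'a::euclidean_space \<Rightarrow> 'b::euclidean_space \<Rightarrow> real"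
  assumes "continuous_on UNIV (\<lambda>z. G (fst z) (snd z))"
  shows "continuous_on UNIV (\<lambda>s. G x (v + s *\<^sub>R i))"
proof -
  have "continuous_on UNIV ((\<lambda>z. G (fst z) (snd z)) \<circ> (\<lambda>s. (x, v + s *\<^sub>R i)))"
    by (rule continuous_on_compose[OF _ continuous_on_subset[OF assms]]) (auto intro!: continuous_intros)
  then show ?thesis by (simp add: o_def)
qed


locale vfp =
  fixes \<Phi> :: "'a::euclidean_space \<Rightarrow> real" and gPhi gK :: "'a \<Rightarrow> 'a"
    and cPhi c0 \<gamma> T :: real and m :: "real \<Rightarrow> 'a \<Rightarrow> 'a \<Rightarrow> real"
    and mt mx mv mvv
  assumes gpos: "\<gamma> > 0"
    and Phi_grad: "\<forall>x. (\<Phi> has_derivative (\<lambda>h. gPhi x \<bullet> h)) (at x)"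
    and growth: "\<forall>x. norm (gPhi x) \<le> cPhi * (1 + norm x)"
    and lip: "cPhi-lipschitz_on UNIV gPhi"
    and gK_meas: "gK \<in> borel_measurable borel"
    and T_nonneg: "T \<ge> 0"
    and nonneg: "\<forall>t\<in>{0..T}. \<forall>x v. m t x v \<ge> 0"
    and dt: "\<forall>t\<in>{0..T}. \<forall>x v. ((\<lambda>s. m s x v) has_real_derivative mt t x v) (at t within {0..T})"
    and dx: "\<forall>t\<in>{0..T}. \<forall>x v. ((\<lambda>y. m t y v) has_derivative (\<lambda>h. mx t x v \<bullet> h)) (at x)"
    and dv: "\<forall>t\<in>{0..T}. \<forall>x v. ((\<lambda>w. m t x w) has_derivative (\<lambda>h. mv t x v \<bullet> h)) (at v)"
    and dvv: "\<forall>t\<in>{0..T}. \<forall>x v. ((\<lambda>w. mv t x w) has_derivative mvv t x v) (at v)"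
    and cm: "continuous_on ({0..T} \<times> UNIV) (\<lambda>(t,x,v). m t x v)"
    and cmt: "continuous_on ({0..T} \<times> UNIV) (\<lambda>(t,x,v). mt t x v)"
    and cmx: "continuous_on ({0..T} \<times> UNIV) (\<lambda>(t,x,v). mx t x v)"
    and cmv: "continuous_on ({0..T} \<times> UNIV) (\<lambda>(t,x,v). mv t x v)"
    and cmvv: "\<forall>b. continuous_on ({0..T} \<times> UNIV) (\<lambda>(t,x,v). mvv t x v b)"
    and dom: "\<forall>q\<ge>1. \<forall>k::nat. \<exists>g::'a\<times>'a\<Rightarrow>real. integrable lborel g \<and>
         (\<forall>t\<in>{0..T}. \<forall>x v.
            (1 + norm x + norm v) ^ k *
            (\<bar>m t x v\<bar> + \<bar>mt t x v\<bar> + norm (mx t x v) + norm (mv t x v)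
               + (\<Sum>b\<in>Basis. norm (mvv t x v b))) powr q
            * exp ((q - 1) * Ham \<Phi> x v) \<le> g (x, v))"
    and eq: "\<forall>t\<in>{0..T}. \<forall>x v.
         mt t x v + \<gamma> * (v \<bullet> mx t x v)
         + \<gamma> * ((force gPhi gK (xmarg (m t)) x - \<gamma> *\<^sub>R v) \<bullet> mv t x v
                 - \<gamma> * real DIM('a) * m t x v)
         = \<gamma>\<^sup>2 * (\<Sum>b\<in>Basis. mvv t x v b \<bullet> b)"
    and c0b: "\<forall>t\<in>{0..T}. AE x in lborel.
         integrable lborel (\<lambda>y. xmarg (m t) y *\<^sub>R gK (x - y)) \<and>
         norm (conv_field gK (xmarg (m t)) x) \<le> c0"
begin

lemma cont_fix:
  assumes c: "continuous_on ({0..T} \<times> UNIV) (\<lambda>(t,x,v). f t x v)" and t: "t \<in> {0..T}"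
  shows "continuous_on UNIV (\<lambda>z. f t (fst z) (snd z))"
proof -
  have "continuous_on UNIV ((\<lambda>(t,x,v). f t x v) \<circ> (\<lambda>z. (t, z)))"
    by (rule continuous_on_compose[OF _ continuous_on_subset[OF c]]) (use t in \<open>auto intro!: continuous_intros\<close>)
  then show ?thesis by (simp add: o_def case_prod_beta)
qed

lemma cPhi_nonneg: "cPhi \<ge> 0" using lip by (auto simp: lipschitz_on_def)

lemma gPhi_cont: "continuous_on UNIV gPhi"
  using lip by (rule lipschitz_on_continuous_on)

lemma Phi_cont: "continuous_on UNIV \<Phi>"
  using Phi_grad by (meson has_derivative_continuous continuous_at_imp_continuous_on)


definition w :: "real \<Rightarrow> 'a \<Rightarrow> 'a \<Rightarrow> real" where "w p x v = exp ((p - 1) * Ham \<Phi> x v)"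
definition MM where "MM t x v = \<bar>m t x v\<bar> + \<bar>mt t x v\<bar> + norm (mx t x v) + norm (mv t x v)
               + (\<Sum>b\<in>Basis. norm (mvv t x v b))"
definition NN :: "'a \<Rightarrow> 'a \<Rightarrow> real" where "NN x v = 1 + norm x + norm v"
definition bb where "bb t x = conv_field gK (xmarg (m t)) x"
definition PP where "PP p t x v = m t x v powr p"
definition QQ where "QQ p t x v = m t x v powr (p - 1)"
definition RR where "RR p t x v = (if p = 2 then 1 else m t x v powr (p - 2))"

definition gd :: "real \<Rightarrow> nat \<Rightarrow> 'a \<times> 'a \<Rightarrow> real" where
  "gd q k = (SOME g. integrable lborel g \<and>
         (\<forall>t\<in>{0..T}. \<forall>x v. NN x v ^ k * MM t x v powr q * w q x v \<le> g (x, v)))"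

lemma gd: assumes "q \<ge> 1"
  shows "integrable lborel (gd q k)"
    "\<And>t x v. t \<in> {0..T} \<Longrightarrow> NN x v ^ k * MM t x v powr q * w q x v \<le> gd q k (x, v)"
proof -
  have ex: "\<exists>g. integrable lborel g \<and>
         (\<forall>t\<in>{0..T}. \<forall>x v. NN x v ^ k * MM t x v powr q * w q x v \<le> g (x, v))"
    using dom assms unfolding NN_def MM_def w_def by blast
  show "integrable lborel (gd q k)" using someI_ex[OF ex] unfolding gd_def by blast
  show "\<And>t x v. t \<in> {0..T} \<Longrightarrow> NN x v ^ k * MM t x v powr q * w q x v \<le> gd q k (x, v)"
    using someI_ex[OF ex] unfolding gd_def by blast
qed

lemma w_pos: "w q x v > 0" by (simp add: w_def)
lemma NN_ge1: "NN x v \<ge> 1" by (simp add: NN_def)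
lemma MM_nn: "MM t x v \<ge> 0" by (simp add: MM_def sum_nonneg)

definition F1 where "F1 p t i x v = PP p t x v * w p x v * (v \<bullet> i) * 1"
definition dF1 where "dF1 p t i x v = p * (QQ p t x v * (mx t x v \<bullet> i) * w p x v * (v \<bullet> i) * 1)
   + (p - 1) * (PP p t x v * w p x v * (gPhi x \<bullet> i) * (v \<bullet> i))"
definition F2 where "F2 p t (\<phi> :: 'a \<Rightarrow> real) x v = PP p t x v * w p x v * \<phi> x * 1"
definition dF2 where "dF2 p t i (\<phi> :: 'a \<Rightarrow> real) x v = p * (QQ p t x v * (mv t x v \<bullet> i) * w p x v * \<phi> x * 1)
   + (p - 1) * (PP p t x v * w p x v * \<phi> x * (v \<bullet> i))"
definition dF3 where "dF3 p t i x v = p * (QQ p t x v * (mv t x v \<bullet> i) * w p x v * (v \<bullet> i) * 1)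
   + (p - 1) * (PP p t x v * w p x v * (v \<bullet> i) * (v \<bullet> i)) + PP p t x v * w p x v * 1 * 1"
definition F4 where "F4 p t i x v = QQ p t x v * (mv t x v \<bullet> i) * w p x v * 1 * 1"
definition dF4 where "dF4 p t i x v = (p - 1) * (RR p t x v * (mv t x v \<bullet> i) * (mv t x v \<bullet> i) * w p x v * 1 * 1)
   + (p - 1) * (QQ p t x v * (mv t x v \<bullet> i) * w p x v * (v \<bullet> i) * 1)
   + QQ p t x v * (mvv t x v i \<bullet> i) * w p x v * 1 * 1"

context
  fixes t p :: real
  assumes t: "t \<in> {0..T}" and p: "p \<ge> 2"
begin

lemma mnn: "m t x v \<ge> 0" using nonneg t by auto

lemma Dx_m: "((\<lambda>s. m t (x + s *\<^sub>R i) v) has_real_derivative mx t (x + s *\<^sub>R i) v \<bullet> i) (at s)"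
  by (rule line_deriv) (use dx t in auto)

lemma Dv_m: "((\<lambda>s. m t x (v + s *\<^sub>R i)) has_real_derivative mv t x (v + s *\<^sub>R i) \<bullet> i) (at s)"
  by (rule line_deriv) (use dv t in auto)

lemma Dv_mv: "((\<lambda>s. mv t x (v + s *\<^sub>R i) \<bullet> j) has_real_derivative mvv t x (v + s *\<^sub>R i) i \<bullet> j) (at s)"
  by (rule line_deriv_lin) (use dvv t in auto)

lemma Dx_Phi: "((\<lambda>s. \<Phi> (x + s *\<^sub>R i)) has_real_derivative gPhi (x + s *\<^sub>R i) \<bullet> i) (at s)"
  by (rule line_deriv) (use Phi_grad in auto)

lemma Dv_nv: "((\<lambda>s. (norm ((v::'a) + s *\<^sub>R i))\<^sup>2 / 2) has_real_derivative (v + s *\<^sub>R i) \<bullet> i) (at s)"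
proof -
  have "((\<lambda>u. (norm u)\<^sup>2 / 2) has_derivative (\<lambda>h. (v + s *\<^sub>R i) \<bullet> h)) (at (v + s *\<^sub>R i))"
    unfolding power2_norm_eq_inner
    by (auto intro!: derivative_eq_intros simp: inner_commute)
  from line_deriv[OF this] show ?thesis .
qed

lemma Dx_w: "((\<lambda>s. w p (x + s *\<^sub>R i) v) has_real_derivative
   (p - 1) * (gPhi (x + s *\<^sub>R i) \<bullet> i) * w p (x + s *\<^sub>R i) v) (at s)"
proof -
  have h: "((\<lambda>s. (p - 1) * (\<Phi> (x + s *\<^sub>R i) + (norm v)\<^sup>2 / 2)) has_real_derivative (p - 1) * (gPhi (x + s *\<^sub>R i) \<bullet> i + 0)) (at s)"
    by (rule DERIV_cmult[OF DERIV_add[OF Dx_Phi DERIV_const]])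
  show ?thesis using DERIV_chain2[OF DERIV_exp h] unfolding w_def Ham_def by (simp add: algebra_simps)
qed

lemma Dv_w: "((\<lambda>s. w p x (v + s *\<^sub>R i)) has_real_derivative
   (p - 1) * ((v + s *\<^sub>R i) \<bullet> i) * w p x (v + s *\<^sub>R i)) (at s)"
proof -
  have h: "((\<lambda>s. (p - 1) * (\<Phi> x + (norm (v + s *\<^sub>R i))\<^sup>2 / 2)) has_real_derivative (p - 1) * (0 + (v + s *\<^sub>R i) \<bullet> i)) (at s)"
    by (rule DERIV_cmult[OF DERIV_add[OF DERIV_const Dv_nv]])
  show ?thesis using DERIV_chain2[OF DERIV_exp h] unfolding w_def Ham_def by (simp add: algebra_simps)
qed

lemma Dx_P: "((\<lambda>s. PP p t (x + s *\<^sub>R i) v) has_real_derivative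
   p * QQ p t (x + s *\<^sub>R i) v * (mx t (x + s *\<^sub>R i) v \<bullet> i)) (at s)"
  unfolding PP_def QQ_def
  by (rule powr_deriv_gt1[OF Dx_m, simplified]) (use p mnn in auto)

lemma Dv_P: "((\<lambda>s. PP p t x (v + s *\<^sub>R i)) has_real_derivative
   p * QQ p t x (v + s *\<^sub>R i) * (mv t x (v + s *\<^sub>R i) \<bullet> i)) (at s)"
  unfolding PP_def QQ_def
  by (rule powr_deriv_gt1[OF Dv_m, simplified]) (use p mnn in auto)

lemma Dv_Q: "((\<lambda>s. QQ p t x (v + s *\<^sub>R i)) has_real_derivative
   (p - 1) * RR p t x (v + s *\<^sub>R i) * (mv t x (v + s *\<^sub>R i) \<bullet> i)) (at s)"
proof -
  have "((\<lambda>s. m t x (v + s *\<^sub>R i) powr (p - 1)) has_real_derivative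
    (p - 1) * (if p - 1 = 1 then 1 else m t x (v + s *\<^sub>R i) powr (p - 1 - 1)) * (mv t x (v + s *\<^sub>R i) \<bullet> i)) (at s)"
    by (rule powr_deriv_ge1[OF Dv_m]) (use p mnn in auto)
  moreover have "(if p - 1 = 1 then 1 else m t x (v + s *\<^sub>R i) powr (p - 1 - 1)) = RR p t x (v + s *\<^sub>R i)"
    by (auto simp: RR_def)
  ultimately show ?thesis by (simp add: QQ_def)
qed


lemma c_m: "continuous_on UNIV (\<lambda>z. m t (fst z) (snd z))"
  by (rule cont_fix[OF cm t])

lemma c_mt: "continuous_on UNIV (\<lambda>z. mt t (fst z) (snd z))"
  by (rule cont_fix[OF cmt t])

lemma c_mx: "continuous_on UNIV (\<lambda>z. mx t (fst z) (snd z) \<bullet> i)"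
  using cont_fix[OF cmx t] by (auto intro!: continuous_intros)

lemma c_mv: "continuous_on UNIV (\<lambda>z. mv t (fst z) (snd z) \<bullet> i)"
  using cont_fix[OF cmv t] by (auto intro!: continuous_intros)

lemma c_mvv: "continuous_on UNIV (\<lambda>z. mvv t (fst z) (snd z) i \<bullet> j)"
  using cont_fix[OF cmvv[rule_format, of i] t] by (auto intro!: continuous_intros)

lemma c_g: "continuous_on UNIV (\<lambda>z::'a\<times>'a. gPhi (fst z) \<bullet> i)"
  by (intro continuous_intros continuous_on_compose2[OF gPhi_cont]) auto

lemma c_v: "continuous_on UNIV (\<lambda>z::'a\<times>'a. snd z \<bullet> i)"
  by (intro continuous_intros)

lemma c_w: "continuous_on UNIV (\<lambda>z. w p (fst z) (snd z))"
  unfolding w_def Ham_def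
  by (intro continuous_intros continuous_on_compose2[OF Phi_cont]) auto

lemma c_P: "continuous_on UNIV (\<lambda>z. PP p t (fst z) (snd z))"
  unfolding PP_def by (rule continuous_on_powr'[OF c_m continuous_on_const]) (use mnn p in auto)

lemma c_Q: "continuous_on UNIV (\<lambda>z. QQ p t (fst z) (snd z))"
  unfolding QQ_def by (rule continuous_on_powr'[OF c_m continuous_on_const]) (use mnn p in auto)

lemma c_R: "continuous_on UNIV (\<lambda>z. RR p t (fst z) (snd z))"
proof (cases "p = 2")
  case True then show ?thesis by (simp add: RR_def)
next
  case False
  then have "continuous_on UNIV (\<lambda>z. m t (fst z) (snd z) powr (p - 2))"
    by (intro continuous_on_powr'[OF c_m continuous_on_const]) (use mnn p in auto)
  then show ?thesis using False by (simp add: RR_def)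
qed

lemmas c_all = c_m c_mt c_mx c_mv c_mvv c_g c_v c_w c_P c_Q c_R

lemma meas_of_cont: "continuous_on UNIV f \<Longrightarrow> (f :: 'a\<times>'a \<Rightarrow> real) \<in> borel_measurable lborel"
  by (simp add: borel_measurable_continuous_onI)


lemma b_m: "m t x v \<le> MM t x v" using mnn[of x v] by (simp add: MM_def sum_nonneg)

lemma inner_basis_le: "(i::'a) \<in> Basis \<Longrightarrow> \<bar>y \<bullet> i\<bar> \<le> norm y"
  using Basis_le_norm by blast

lemma sum_mvv_nn: "0 \<le> (\<Sum>b\<in>Basis. norm (mvv t x v b))" by (simp add: sum_nonneg)
lemma b_mx: assumes i: "i \<in> Basis" shows "\<bar>mx t x v \<bullet> i\<bar> \<le> MM t x v"
  using inner_basis_le[OF i, of "mx t x v"] norm_ge_zero[of "mx t x v"] norm_ge_zero[of "mv t x v"] abs_ge_zero[of "m t x v"] abs_ge_zero[of "mt t x v"] sum_mvv_nn[of x v] unfolding MM_def by linarith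
lemma b_mv: assumes i: "i \<in> Basis" shows "\<bar>mv t x v \<bullet> i\<bar> \<le> MM t x v"
  using inner_basis_le[OF i, of "mv t x v"] norm_ge_zero[of "mx t x v"] norm_ge_zero[of "mv t x v"] abs_ge_zero[of "m t x v"] abs_ge_zero[of "mt t x v"] sum_mvv_nn[of x v] unfolding MM_def by linarith
lemma b_mt: "\<bar>mt t x v\<bar> \<le> MM t x v"
  using norm_ge_zero[of "mx t x v"] norm_ge_zero[of "mv t x v"] abs_ge_zero[of "m t x v"] abs_ge_zero[of "mt t x v"] sum_mvv_nn[of x v] unfolding MM_def by linarith
lemma b_mvv: "i \<in> Basis \<Longrightarrow> \<bar>mvv t x v i \<bullet> i\<bar> \<le> MM t x v"
proof -
  assume i: "i \<in> Basis"
  have "\<bar>mvv t x v i \<bullet> i\<bar> \<le> norm (mvv t x v i)" using inner_basis_le[OF i] .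
  also have "\<dots> \<le> (\<Sum>b\<in>Basis. norm (mvv t x v b))" by (rule member_le_sum) (use i in auto)
  finally show ?thesis using norm_ge_zero[of "mx t x v"] norm_ge_zero[of "mv t x v"] abs_ge_zero[of "m t x v"] abs_ge_zero[of "mt t x v"] sum_mvv_nn[of x v] unfolding MM_def by linarith
qed

lemma b_v: assumes i: "i \<in> Basis" shows "\<bar>v \<bullet> i\<bar> \<le> NN x v"
  using inner_basis_le[OF i, of v] norm_ge_zero[of x] unfolding NN_def by linarith

lemma b_g: "i \<in> Basis \<Longrightarrow> \<bar>gPhi x \<bullet> i\<bar> \<le> cPhi * NN x v"
proof -
  assume i: "i \<in> Basis"
  have "\<bar>gPhi x \<bullet> i\<bar> \<le> cPhi * (1 + norm x)" using inner_basis_le[OF i, of "gPhi x"] growth by (meson order_trans)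
  also have "\<dots> \<le> cPhi * NN x v" using cPhi_nonneg by (intro mult_left_mono) (auto simp: NN_def)
  finally show ?thesis .
qed

lemma b_P: "\<bar>PP p t x v\<bar> \<le> MM t x v powr p"
  unfolding PP_def using mnn[of x v] b_m[of x v] p by (simp add: powr_mono2)

lemma b_QX: assumes "\<bar>X\<bar> \<le> MM t x v" shows "\<bar>QQ p t x v * X\<bar> \<le> MM t x v powr p"
proof (cases "MM t x v = 0")
  case True then show ?thesis using assms by simp
next
  case False
  then have M: "MM t x v > 0" using MM_nn[of t x v] by simp
  have "\<bar>QQ p t x v * X\<bar> = QQ p t x v * \<bar>X\<bar>" by (simp add: QQ_def abs_mult)
  also have "\<dots> \<le> MM t x v powr (p - 1) * MM t x v"
    unfolding QQ_def using mnn[of x v] b_m[of x v] p assms by (intro mult_mono powr_mono2) auto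
  also have "\<dots> = MM t x v powr p" using M by (simp add: powr_diff)
  finally show ?thesis .
qed

lemma b_RXY: assumes "\<bar>X\<bar> \<le> MM t x v" "\<bar>Y\<bar> \<le> MM t x v"
  shows "\<bar>RR p t x v * X * Y\<bar> \<le> MM t x v powr p"
proof (cases "MM t x v = 0")
  case True then show ?thesis using assms by simp
next
  case False
  then have M: "MM t x v > 0" using MM_nn[of t x v] by simp
  have R: "0 \<le> RR p t x v" "RR p t x v \<le> (if p = 2 then 1 else MM t x v powr (p - 2))"
    unfolding RR_def using mnn[of x v] b_m[of x v] p by (auto intro: powr_mono2)
  have "\<bar>RR p t x v * X * Y\<bar> = RR p t x v * \<bar>X\<bar> * \<bar>Y\<bar>" using R by (simp add: abs_mult)
  also have "\<dots> \<le> (if p = 2 then 1 else MM t x v powr (p - 2)) * MM t x v * MM t x v"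
    using R assms by (intro mult_mono) auto
  also have "\<dots> = MM t x v powr p" using M
    by (auto simp: powr_diff power2_eq_square)
  finally show ?thesis .
qed

lemma b_W: "NN x v ^ 2 * MM t x v powr p * w p x v \<le> gd p 2 (x, v)"
  using gd(2)[of p t x v 2] p t by simp

lemma atom_int:
  fixes U a c :: "'a \<Rightarrow> 'a \<Rightarrow> real"
  assumes Um: "(\<lambda>z. U (fst z) (snd z)) \<in> borel_measurable lborel"
    and Ub: "\<And>x v. \<bar>U x v\<bar> \<le> MM t x v powr p"
    and am: "(\<lambda>z. a (fst z) (snd z)) \<in> borel_measurable lborel"
    and ab: "AE z in lborel. \<bar>a (fst z) (snd z)\<bar> \<le> Ka * NN (fst z) (snd z)"
    and cm': "(\<lambda>z. c (fst z) (snd z)) \<in> borel_measurable lborel"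
    and cb: "AE z in lborel. \<bar>c (fst z) (snd z)\<bar> \<le> Kc * NN (fst z) (snd z)"
    and K: "Ka \<ge> 0" "Kc \<ge> 0"
  shows "integrable lborel (\<lambda>z. U (fst z) (snd z) * w p (fst z) (snd z) * a (fst z) (snd z) * c (fst z) (snd z))"
proof (rule Bochner_Integration.integrable_bound[OF integrable_mult_right[OF gd(1)[of p 2]]])
  show "(\<lambda>z. U (fst z) (snd z) * w p (fst z) (snd z) * a (fst z) (snd z) * c (fst z) (snd z)) \<in> borel_measurable lborel"
    using Um am cm' meas_of_cont[OF c_w] by measurable
  show "AE z in lborel. norm (U (fst z) (snd z) * w p (fst z) (snd z) * a (fst z) (snd z) * c (fst z) (snd z))
      \<le> norm (Ka * Kc * gd p 2 z)"
    using ab cb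
  proof eventually_elim
    case (elim z)
    obtain x v where z: "z = (x, v)" by fastforce
    have "norm (U x v * w p x v * a x v * c x v) = \<bar>U x v\<bar> * w p x v * \<bar>a x v\<bar> * \<bar>c x v\<bar>"
      using w_pos[of p x v] by (simp add: abs_mult)
    also have "\<dots> \<le> MM t x v powr p * w p x v * (Ka * NN x v) * (Kc * NN x v)"
      using elim Ub[of x v] w_pos[of p x v] z K NN_ge1[of x v] by (intro mult_mono mult_nonneg_nonneg) auto
    also have "\<dots> = Ka * Kc * (NN x v ^ 2 * MM t x v powr p * w p x v)"
      by (simp add: power2_eq_square algebra_simps)
    also have "\<dots> \<le> Ka * Kc * gd p 2 (x, v)"
      using K b_W[of x v] by (intro mult_left_mono) auto
    also have "\<dots> \<le> norm (Ka * Kc * gd p 2 (x, v))" by simp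
    finally show ?case using z by simp
  qed
  show "p \<ge> 1" using p by simp
qed


lemma m_meas2: "(\<lambda>(y, v). m t y v) \<in> borel_measurable (lborel \<Otimes>\<^sub>M (lborel :: 'a measure))"
proof -
  have "(\<lambda>z. m t (fst z) (snd z)) \<in> borel_measurable (lborel :: ('a \<times> 'a) measure)"
    by (rule meas_of_cont[OF c_m])
  then show ?thesis by (simp add: lborel_prod case_prod_beta)
qed

lemma xmarg_meas[measurable]: "xmarg (m t) \<in> borel_measurable lborel"
  unfolding xmarg_def using lborel.borel_measurable_lebesgue_integral[OF m_meas2] by simp

lemma bb_meas: "bb t \<in> borel_measurable lborel"
proof -
  have gm[measurable]: "gK \<in> borel_measurable borel" by (rule gK_meas)
  have "(\<lambda>(x, y). xmarg (m t) y *\<^sub>R gK (x - y)) \<in> borel_measurable (lborel \<Otimes>\<^sub>M (lborel :: 'a measure))"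
    by measurable
  from lborel.borel_measurable_lebesgue_integral[OF this]
  have "(\<lambda>x. \<integral>y. xmarg (m t) y *\<^sub>R gK (x - y) \<partial>lborel) \<in> borel_measurable lborel" by simp
  moreover have "bb t = (\<lambda>x. \<integral>y. xmarg (m t) y *\<^sub>R gK (x - y) \<partial>lborel)"
    by (auto simp: fun_eq_iff bb_def conv_field_def)
  ultimately show ?thesis by simp
qed

lemma AE_fst:
  assumes "AE x in lborel. P x"
  shows "AE z in (lborel :: ('a \<times> 'a) measure). P (fst z)"
proof -
  from assms obtain N where N: "{x \<in> space lborel. \<not> P x} \<subseteq> N" "emeasure lborel N = 0" "N \<in> sets lborel"
    by (rule AE_E)
  have "N \<times> UNIV \<in> null_sets (lborel \<Otimes>\<^sub>M (lborel :: 'a measure))"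
    using N by (intro lborel.times_in_null_sets1) auto
  then have "N \<times> UNIV \<in> null_sets (lborel :: ('a \<times> 'a) measure)" by (simp add: lborel_prod)
  then show ?thesis
    by (rule AE_I') (use N in auto)
qed

lemma bb_AE: "AE z in (lborel :: ('a \<times> 'a) measure). norm (bb t (fst z)) \<le> c0"
  using AE_fst[OF c0b[rule_format, OF t]] unfolding bb_def by (auto elim: eventually_mono)

lemma c0_nn: "c0 \<ge> 0"
proof (rule ccontr)
  assume "\<not> c0 \<ge> 0"
  then have "AE z in (lborel :: ('a \<times> 'a) measure). False"
    using bb_AE by (auto elim: eventually_mono dest: order_trans[OF norm_ge_zero])
  then have "ae_filter (lborel :: ('a \<times> 'a) measure) = bot" by (simp add: eventually_False)
  then show False by (simp add: ae_filter_eq_bot_iff)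
qed

lemma bbi_meas: "(\<lambda>z::'a\<times>'a. bb t (fst z) \<bullet> i) \<in> borel_measurable lborel"
proof -
  have [measurable]: "bb t \<in> borel_measurable borel" using bb_meas by simp
  have "(\<lambda>z::'a\<times>'a. bb t (fst z) \<bullet> i) \<in> borel_measurable (lborel \<Otimes>\<^sub>M lborel)" by measurable
  then show ?thesis by (simp add: lborel_prod)
qed

lemma bbi_AE: assumes i: "i \<in> Basis"
  shows "AE z in (lborel :: ('a \<times> 'a) measure). \<bar>bb t (fst z) \<bullet> i\<bar> \<le> c0 * NN (fst z) (snd z)"
  using bb_AE
proof eventually_elim
  case (elim z)
  have "\<bar>bb t (fst z) \<bullet> i\<bar> \<le> c0" using inner_basis_le[OF i] elim by (meson order_trans)
  also have "\<dots> \<le> c0 * NN (fst z) (snd z)" using c0_nn NN_ge1 by (simp add: mult_le_cancel_left1)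
  finally show ?case .
qed


lemma D_F1: assumes i: "i \<in> Basis"
  shows "((\<lambda>s. F1 p t i (x + s *\<^sub>R i) v) has_real_derivative dF1 p t i (x + s *\<^sub>R i) v) (at s)"
proof -
  note d = DERIV_mult[OF DERIV_mult[OF DERIV_mult[OF Dx_P[where x=x and i=i and v=v and s=s] Dx_w[where x=x and i=i and v=v and s=s]] DERIV_const[of "v \<bullet> i"]] DERIV_const[of 1]]
  show ?thesis unfolding F1_def dF1_def
    by (rule DERIV_cong[OF d]) (simp add: algebra_simps)
qed

lemma D_F2: assumes i: "i \<in> Basis"
  shows "((\<lambda>s. F2 p t \<phi> x (v + s *\<^sub>R i)) has_real_derivative dF2 p t i \<phi> x (v + s *\<^sub>R i)) (at s)"
proof -
  note d = DERIV_mult[OF DERIV_mult[OF DERIV_mult[OF Dv_P[where x=x and i=i and v=v and s=s] Dv_w[where x=x and i=i and v=v and s=s]] DERIV_const[of "\<phi> x"]] DERIV_const[of 1]]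
  show ?thesis unfolding F2_def dF2_def
    by (rule DERIV_cong[OF d]) (simp add: algebra_simps)
qed

lemma Dv_vi: assumes i: "i \<in> Basis"
  shows "((\<lambda>s. ((v::'a) + s *\<^sub>R i) \<bullet> i) has_real_derivative 1) (at s)"
proof -
  have "((\<lambda>u. u \<bullet> i) has_derivative (\<lambda>h. i \<bullet> h)) (at (v + s *\<^sub>R i))"
    by (auto intro!: derivative_eq_intros simp: inner_commute)
  from line_deriv[OF this] show ?thesis using i by simp
qed

lemma D_F3: assumes i: "i \<in> Basis"
  shows "((\<lambda>s. F1 p t i x (v + s *\<^sub>R i)) has_real_derivative dF3 p t i x (v + s *\<^sub>R i)) (at s)"
proof -
  note d = DERIV_mult[OF DERIV_mult[OF DERIV_mult[OF Dv_P[where x=x and i=i and v=v and s=s] Dv_w[where x=x and i=i and v=v and s=s]] Dv_vi[OF i, of v s]] DERIV_const[of 1]]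
  show ?thesis unfolding F1_def dF3_def
    by (rule DERIV_cong[OF d]) (simp add: algebra_simps)
qed

lemma D_F4: assumes i: "i \<in> Basis"
  shows "((\<lambda>s. F4 p t i x (v + s *\<^sub>R i)) has_real_derivative dF4 p t i x (v + s *\<^sub>R i)) (at s)"
proof -
  note d = DERIV_mult[OF DERIV_mult[OF DERIV_mult[OF DERIV_mult[OF Dv_Q[where x=x and i=i and v=v and s=s] Dv_mv[where x=x and i=i and v=v and s=s and j=i]] Dv_w[where x=x and i=i and v=v and s=s]] DERIV_const[of 1]] DERIV_const[of 1]]
  show ?thesis unfolding F4_def dF4_def
    by (rule DERIV_cong[OF d]) (simp add: algebra_simps)
qed


lemma pf1_m: "(\<lambda>z::'a\<times>'a. 1::real) \<in> borel_measurable lborel" by simp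
lemma pf1_b: "AE z in lborel. \<bar>1::real\<bar> \<le> 1 * NN (fst z) (snd z)" by (simp add: NN_ge1)
lemma pfv_b: assumes i: "i \<in> Basis" shows "AE z in lborel. \<bar>snd z \<bullet> i\<bar> \<le> 1 * NN (fst z) (snd z)"
  using b_v[OF i] by simp
lemma pfg_b: assumes i: "i \<in> Basis" shows "AE z in lborel. \<bar>gPhi (fst z) \<bullet> i\<bar> \<le> cPhi * NN (fst z) (snd z)"
  using b_g[OF i] by simp

context
  fixes i :: 'a assumes i: "i \<in> Basis"
begin

lemma int_F1: "integrable lborel (\<lambda>z. F1 p t i (fst z) (snd z))"
  unfolding F1_def by (rule atom_int[where U="\<lambda>x v. PP p t x v" and a="\<lambda>x v. v \<bullet> i" and c="\<lambda>x v. 1" and Ka="1" and Kc="1"])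
      (use b_P meas_of_cont[OF c_v] pfv_b[OF i] pf1_m pf1_b in \<open>auto intro!: meas_of_cont borel_measurable_continuous_onI continuous_intros c_all simp: c0_nn cPhi_nonneg\<close>)

lemma int_dF1: "integrable lborel (\<lambda>z. dF1 p t i (fst z) (snd z))"
  unfolding dF1_def
proof (intro Bochner_Integration.integrable_add Bochner_Integration.integrable_mult_right)
  show "integrable lborel (\<lambda>z. QQ p t (fst z) (snd z) * (mx t (fst z) (snd z) \<bullet> i) * w p (fst z) (snd z) * (snd z \<bullet> i) * 1)"
    by (rule atom_int[where U="\<lambda>x v. QQ p t x v * (mx t x v \<bullet> i)" and a="\<lambda>x v. v \<bullet> i" and c="\<lambda>x v. 1" and Ka="1" and Kc="1"])
      (use b_QX[OF b_mx[OF i]] meas_of_cont[OF c_v] pfv_b[OF i] pf1_m pf1_b in \<open>auto intro!: meas_of_cont borel_measurable_continuous_onI continuous_intros c_all simp: c0_nn cPhi_nonneg\<close>)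
  show "integrable lborel (\<lambda>z. PP p t (fst z) (snd z) * w p (fst z) (snd z) * (gPhi (fst z) \<bullet> i) * (snd z \<bullet> i))"
    by (rule atom_int[where U="\<lambda>x v. PP p t x v" and a="\<lambda>x v. gPhi x \<bullet> i" and c="\<lambda>x v. v \<bullet> i" and Ka="cPhi" and Kc="1"])
      (use b_P meas_of_cont[OF c_g] pfg_b[OF i] meas_of_cont[OF c_v] pfv_b[OF i] in \<open>auto intro!: meas_of_cont borel_measurable_continuous_onI continuous_intros c_all simp: c0_nn cPhi_nonneg\<close>)
qed

lemma int_dF3: "integrable lborel (\<lambda>z. dF3 p t i (fst z) (snd z))"
  unfolding dF3_def
proof (intro Bochner_Integration.integrable_add Bochner_Integration.integrable_mult_right)
  show "integrable lborel (\<lambda>z. QQ p t (fst z) (snd z) * (mv t (fst z) (snd z) \<bullet> i) * w p (fst z) (snd z) * (snd z \<bullet> i) * 1)"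
    by (rule atom_int[where U="\<lambda>x v. QQ p t x v * (mv t x v \<bullet> i)" and a="\<lambda>x v. v \<bullet> i" and c="\<lambda>x v. 1" and Ka="1" and Kc="1"])
      (use b_QX[OF b_mv[OF i]] meas_of_cont[OF c_v] pfv_b[OF i] pf1_m pf1_b in \<open>auto intro!: meas_of_cont borel_measurable_continuous_onI continuous_intros c_all simp: c0_nn cPhi_nonneg\<close>)
  show "integrable lborel (\<lambda>z. PP p t (fst z) (snd z) * w p (fst z) (snd z) * (snd z \<bullet> i) * (snd z \<bullet> i))"
    by (rule atom_int[where U="\<lambda>x v. PP p t x v" and a="\<lambda>x v. v \<bullet> i" and c="\<lambda>x v. v \<bullet> i" and Ka="1" and Kc="1"])
      (use b_P meas_of_cont[OF c_v] pfv_b[OF i] meas_of_cont[OF c_v] pfv_b[OF i] in \<open>auto intro!: meas_of_cont borel_measurable_continuous_onI continuous_intros c_all simp: c0_nn cPhi_nonneg\<close>)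
  show "integrable lborel (\<lambda>z. PP p t (fst z) (snd z) * w p (fst z) (snd z) * 1 * 1)"
    by (rule atom_int[where U="\<lambda>x v. PP p t x v" and a="\<lambda>x v. 1" and c="\<lambda>x v. 1" and Ka="1" and Kc="1"])
      (use b_P pf1_m pf1_b pf1_m pf1_b in \<open>auto intro!: meas_of_cont borel_measurable_continuous_onI continuous_intros c_all simp: c0_nn cPhi_nonneg\<close>)
qed

lemma int_F4: "integrable lborel (\<lambda>z. F4 p t i (fst z) (snd z))"
  unfolding F4_def by (rule atom_int[where U="\<lambda>x v. QQ p t x v * (mv t x v \<bullet> i)" and a="\<lambda>x v. 1" and c="\<lambda>x v. 1" and Ka="1" and Kc="1"])
      (use b_QX[OF b_mv[OF i]] pf1_m pf1_b pf1_m pf1_b in \<open>auto intro!: meas_of_cont borel_measurable_continuous_onI continuous_intros c_all simp: c0_nn cPhi_nonneg\<close>)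

lemma int_dF4: "integrable lborel (\<lambda>z. dF4 p t i (fst z) (snd z))"
  unfolding dF4_def
proof (intro Bochner_Integration.integrable_add Bochner_Integration.integrable_mult_right)
  show "integrable lborel (\<lambda>z. RR p t (fst z) (snd z) * (mv t (fst z) (snd z) \<bullet> i) * (mv t (fst z) (snd z) \<bullet> i) * w p (fst z) (snd z) * 1 * 1)"
    by (rule atom_int[where U="\<lambda>x v. RR p t x v * (mv t x v \<bullet> i) * (mv t x v \<bullet> i)" and a="\<lambda>x v. 1" and c="\<lambda>x v. 1" and Ka="1" and Kc="1"])
      (use b_RXY[OF b_mv[OF i] b_mv[OF i]] pf1_m pf1_b pf1_m pf1_b in \<open>auto intro!: meas_of_cont borel_measurable_continuous_onI continuous_intros c_all simp: c0_nn cPhi_nonneg\<close>)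
  show "integrable lborel (\<lambda>z. QQ p t (fst z) (snd z) * (mv t (fst z) (snd z) \<bullet> i) * w p (fst z) (snd z) * (snd z \<bullet> i) * 1)"
    by (rule atom_int[where U="\<lambda>x v. QQ p t x v * (mv t x v \<bullet> i)" and a="\<lambda>x v. v \<bullet> i" and c="\<lambda>x v. 1" and Ka="1" and Kc="1"])
      (use b_QX[OF b_mv[OF i]] meas_of_cont[OF c_v] pfv_b[OF i] pf1_m pf1_b in \<open>auto intro!: meas_of_cont borel_measurable_continuous_onI continuous_intros c_all simp: c0_nn cPhi_nonneg\<close>)
  show "integrable lborel (\<lambda>z. QQ p t (fst z) (snd z) * (mvv t (fst z) (snd z) i \<bullet> i) * w p (fst z) (snd z) * 1 * 1)"
    by (rule atom_int[where U="\<lambda>x v. QQ p t x v * (mvv t x v i \<bullet> i)" and a="\<lambda>x v. 1" and c="\<lambda>x v. 1" and Ka="1" and Kc="1"])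
      (use b_QX[OF b_mvv[OF i]] pf1_m pf1_b pf1_m pf1_b in \<open>auto intro!: meas_of_cont borel_measurable_continuous_onI continuous_intros c_all simp: c0_nn cPhi_nonneg\<close>)
qed

context
  fixes \<phi> :: "'a \<Rightarrow> real" and K\<phi> :: real
  assumes \<phi>m: "(\<lambda>z::'a\<times>'a. \<phi> (fst z)) \<in> borel_measurable lborel"
    and \<phi>b: "AE z in lborel. \<bar>\<phi> (fst z)\<bar> \<le> K\<phi> * NN (fst z) (snd z)"
    and K\<phi>: "K\<phi> \<ge> 0"
begin

lemma int_F2: "integrable lborel (\<lambda>z. F2 p t \<phi> (fst z) (snd z))"
  unfolding F2_def by (rule atom_int[where U="\<lambda>x v. PP p t x v" and a="\<lambda>x v. \<phi> x" and c="\<lambda>x v. 1" and Ka="K\<phi>" and Kc="1"])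
      (use b_P \<phi>m \<phi>b pf1_m pf1_b in \<open>auto intro!: meas_of_cont borel_measurable_continuous_onI continuous_intros c_all simp: c0_nn cPhi_nonneg K\<phi>\<close>)

lemma int_dF2: "integrable lborel (\<lambda>z. dF2 p t i \<phi> (fst z) (snd z))"
  unfolding dF2_def
proof (intro Bochner_Integration.integrable_add Bochner_Integration.integrable_mult_right)
  show "integrable lborel (\<lambda>z. QQ p t (fst z) (snd z) * (mv t (fst z) (snd z) \<bullet> i) * w p (fst z) (snd z) * \<phi> (fst z) * 1)"
    by (rule atom_int[where U="\<lambda>x v. QQ p t x v * (mv t x v \<bullet> i)" and a="\<lambda>x v. \<phi> x" and c="\<lambda>x v. 1" and Ka="K\<phi>" and Kc="1"])
      (use b_QX[OF b_mv[OF i]] \<phi>m \<phi>b pf1_m pf1_b in \<open>auto intro!: meas_of_cont borel_measurable_continuous_onI continuous_intros c_all simp: c0_nn cPhi_nonneg K\<phi>\<close>)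
  show "integrable lborel (\<lambda>z. PP p t (fst z) (snd z) * w p (fst z) (snd z) * \<phi> (fst z) * (snd z \<bullet> i))"
    by (rule atom_int[where U="\<lambda>x v. PP p t x v" and a="\<lambda>x v. \<phi> x" and c="\<lambda>x v. v \<bullet> i" and Ka="K\<phi>" and Kc="1"])
      (use b_P \<phi>m \<phi>b meas_of_cont[OF c_v] pfv_b[OF i] in \<open>auto intro!: meas_of_cont borel_measurable_continuous_onI continuous_intros c_all simp: c0_nn cPhi_nonneg K\<phi>\<close>)
qed

end

end

end

end


lemma alg:
  fixes g p mu R w T vmx gmv bmv vmv gv bv vv mvmv d :: real
  shows "p * (R * mu) * w * (g\<^sup>2 * T - g * vmx - g * (- gmv - bmv - g * vmv - g * d * mu))
   - (- g * (p * (R * mu) * w * vmx + (p - 1) * (R * mu * mu) * w * gv)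
      + g * (p * (R * mu) * w * gmv + (p - 1) * (R * mu * mu) * w * gv)
      + g * p * (p * (R * mu) * w * bmv + (p - 1) * (R * mu * mu) * w * bv)
      + g\<^sup>2 * p * (p * (R * mu) * w * vmv + (p - 1) * (R * mu * mu) * w * vv + d * (R * mu * mu) * w)
      + g\<^sup>2 * p * ((p - 1) * R * w * mvmv + (p - 1) * (R * mu) * w * vmv + (R * mu) * w * T))
   = - p * (p - 1) * w * (g\<^sup>2 * R * (mvmv + 2 * mu * vmv + mu * mu * vv) + g * (R * mu) * (bmv + mu * bv))"
  by algebra

lemma sum_inner: "(\<Sum>i\<in>Basis. c * ((x \<bullet> i) * (y \<bullet> i))) = c * (x \<bullet> (y::'a::euclidean_space))"
  by (simp add: euclidean_inner[of x y] sum_distrib_left)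

context vfp begin

definition Sum where "Sum p t x v = (\<Sum>i\<in>Basis. - \<gamma> * dF1 p t i x v + \<gamma> * dF2 p t i (\<lambda>x. gPhi x \<bullet> i) x v
    + \<gamma> * p * dF2 p t i (\<lambda>x. bb t x \<bullet> i) x v + \<gamma>\<^sup>2 * p * dF3 p t i x v + \<gamma>\<^sup>2 * p * dF4 p t i x v)"


context
  fixes t p :: real
  assumes t: "t \<in> {0..T}" and p: "p \<ge> 2"
begin

lemmas c_all' = c_all[OF t p]

context
  fixes i :: 'a assumes i: "i \<in> Basis"
begin

lemmas int_F1' = int_F1[OF t p i] and int_dF1' = int_dF1[OF t p i] and int_dF3' = int_dF3[OF t p i]
  and int_F4' = int_F4[OF t p i] and int_dF4' = int_dF4[OF t p i]
  and int_F2' = int_F2[OF t p i] and int_dF2' = int_dF2[OF t p i]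
  and D_F1' = D_F1[OF t p i] and D_F2' = D_F2[OF t p i] and D_F3' = D_F3[OF t p i] and D_F4' = D_F4[OF t p i]
  and bbi_meas' = bbi_meas[OF t p] and bbi_AE' = bbi_AE[OF t p i] and c0_nn' = c0_nn[OF t p]
  and c_g' = c_g[OF t p] and pfg_b' = pfg_b[OF t p i]

lemma cont_dF1: "continuous_on UNIV (\<lambda>z. dF1 p t i (fst z) (snd z))"
  unfolding dF1_def by (intro continuous_on_add continuous_on_mult continuous_on_const c_all')

lemma cont_dF3: "continuous_on UNIV (\<lambda>z. dF3 p t i (fst z) (snd z))"
  unfolding dF3_def by (intro continuous_on_add continuous_on_mult continuous_on_const c_all')
lemma cont_dF4: "continuous_on UNIV (\<lambda>z. dF4 p t i (fst z) (snd z))"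
  unfolding dF4_def by (intro continuous_on_add continuous_on_mult continuous_on_const c_all')
lemma cont_dF2: assumes "continuous_on UNIV \<phi>"
  shows "continuous_on UNIV (\<lambda>z. dF2 p t i \<phi> (fst z) (snd z))"
proof -
  have "continuous_on UNIV (\<lambda>z::'a\<times>'a. \<phi> (fst z))"
    by (rule continuous_on_compose2[OF assms continuous_on_fst[OF continuous_on_id]]) auto
  then show ?thesis
    unfolding dF2_def by (intro continuous_on_add continuous_on_mult continuous_on_const c_all')
qed

lemma Z1: "(\<integral>z. dF1 p t i (fst z) (snd z) \<partial>lborel) = 0"
  by (rule ibp_x[where F="F1 p t i" and dF="dF1 p t i", OF int_F1' int_dF1' D_F1' cont_line_x[where G="dF1 p t i", OF cont_dF1]])

lemma Z3: "(\<integral>z. dF3 p t i (fst z) (snd z) \<partial>lborel) = 0"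
  by (rule ibp_v[where F="F1 p t i" and dF="dF3 p t i", OF int_F1' int_dF3' D_F3' cont_line_v[where G="dF3 p t i", OF cont_dF3]])
lemma Z4: "(\<integral>z. dF4 p t i (fst z) (snd z) \<partial>lborel) = 0"
  by (rule ibp_v[where F="F4 p t i" and dF="dF4 p t i", OF int_F4' int_dF4' D_F4' cont_line_v[where G="dF4 p t i", OF cont_dF4]])

lemma Z2g: "(\<integral>z. dF2 p t i (\<lambda>x. gPhi x \<bullet> i) (fst z) (snd z) \<partial>lborel) = 0"
proof -
  have m: "(\<lambda>z::'a\<times>'a. gPhi (fst z) \<bullet> i) \<in> borel_measurable lborel" by (rule meas_of_cont[OF t p c_g'])
  have c: "continuous_on UNIV (\<lambda>x. gPhi x \<bullet> i)" by (intro continuous_on_inner continuous_on_const gPhi_cont)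
  show ?thesis
    by (rule ibp_v[where F="F2 p t (\<lambda>x. gPhi x \<bullet> i)" and dF="dF2 p t i (\<lambda>x. gPhi x \<bullet> i)",
        OF int_F2'[OF m pfg_b' cPhi_nonneg] int_dF2'[OF m pfg_b' cPhi_nonneg] D_F2'
           cont_line_v[where G="dF2 p t i (\<lambda>x. gPhi x \<bullet> i)", OF cont_dF2[OF c]]])
qed

lemma Z2b: "(\<integral>z. dF2 p t i (\<lambda>x. bb t x \<bullet> i) (fst z) (snd z) \<partial>lborel) = 0"
proof (rule ibp_v[where F="F2 p t (\<lambda>x. bb t x \<bullet> i)" and dF="dF2 p t i (\<lambda>x. bb t x \<bullet> i)",
        OF int_F2'[OF bbi_meas' bbi_AE' c0_nn'] int_dF2'[OF bbi_meas' bbi_AE' c0_nn'] D_F2'])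
  show "continuous_on UNIV (\<lambda>s. dF2 p t i (\<lambda>x. bb t x \<bullet> i) x (v + s *\<^sub>R i))" for x v
  proof -
    have eq: "(\<lambda>s. dF2 p t i (\<lambda>x. bb t x \<bullet> i) x (v + s *\<^sub>R i)) = (\<lambda>s. dF2 p t i (\<lambda>_. bb t x \<bullet> i) x (v + s *\<^sub>R i))"
      by (simp add: dF2_def)
    show ?thesis unfolding eq
      by (rule cont_line_v[where G="dF2 p t i (\<lambda>_. bb t x \<bullet> i)", OF cont_dF2[OF continuous_on_const]])
  qed
qed

end
lemma pointwise:
  "p * (QQ p t x v * mt t x v) * w p x v * 1 * 1 - Sum p t x v
     \<le> p * (p - 1) / 4 * (norm (bb t x))\<^sup>2 * (PP p t x v * w p x v * 1 * 1)"
proof -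
  define \<mu> where "\<mu> = m t x v"
  define R where "R = RR p t x v"
  define W where "W = w p x v"
  define g where "g = gPhi x"
  define b where "b = bb t x"
  define MX where "MX = mx t x v"
  define MV where "MV = mv t x v"
  define Tr where "Tr = (\<Sum>i\<in>Basis. mvv t x v i \<bullet> i)"
  have Q: "QQ p t x v = R * \<mu>"
    using mnn[OF t p, of x v] p by (cases "\<mu> = 0") (auto simp: QQ_def RR_def R_def \<mu>_def powr_diff power2_eq_square field_simps)
  have P: "PP p t x v = R * \<mu> * \<mu>"
    using mnn[OF t p, of x v] p Q by (cases "\<mu> = 0") (auto simp: QQ_def PP_def \<mu>_def powr_diff field_simps)
  have s1: "(\<Sum>i\<in>Basis. dF1 p t i x v) = p * (R * \<mu>) * W * (v \<bullet> MX) + (p - 1) * (R * \<mu> * \<mu>) * W * (g \<bullet> v)"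
  proof -
    have "(\<Sum>i\<in>Basis. dF1 p t i x v) = (\<Sum>i\<in>Basis. (p * (R * \<mu>) * W) * ((v \<bullet> i) * (MX \<bullet> i)) + ((p - 1) * (R * \<mu> * \<mu>) * W) * ((g \<bullet> i) * (v \<bullet> i)))"
      by (rule sum.cong) (auto simp: dF1_def Q P W_def MX_def g_def algebra_simps)
    then show ?thesis by (simp add: sum.distrib sum_inner)
  qed
  have s2: "(\<Sum>i\<in>Basis. dF2 p t i (\<lambda>x. gPhi x \<bullet> i) x v) = p * (R * \<mu>) * W * (g \<bullet> MV) + (p - 1) * (R * \<mu> * \<mu>) * W * (g \<bullet> v)"
  proof -
    have "(\<Sum>i\<in>Basis. dF2 p t i (\<lambda>x. gPhi x \<bullet> i) x v) = (\<Sum>i\<in>Basis. (p * (R * \<mu>) * W) * ((g \<bullet> i) * (MV \<bullet> i)) + ((p - 1) * (R * \<mu> * \<mu>) * W) * ((g \<bullet> i) * (v \<bullet> i)))"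
      by (rule sum.cong) (auto simp: dF2_def Q P W_def MV_def g_def algebra_simps)
    then show ?thesis by (simp add: sum.distrib sum_inner)
  qed
  have s3: "(\<Sum>i\<in>Basis. dF2 p t i (\<lambda>x. bb t x \<bullet> i) x v) = p * (R * \<mu>) * W * (b \<bullet> MV) + (p - 1) * (R * \<mu> * \<mu>) * W * (b \<bullet> v)"
  proof -
    have "(\<Sum>i\<in>Basis. dF2 p t i (\<lambda>x. bb t x \<bullet> i) x v) = (\<Sum>i\<in>Basis. (p * (R * \<mu>) * W) * ((b \<bullet> i) * (MV \<bullet> i)) + ((p - 1) * (R * \<mu> * \<mu>) * W) * ((b \<bullet> i) * (v \<bullet> i)))"
      by (rule sum.cong) (auto simp: dF2_def Q P W_def MV_def b_def algebra_simps)
    then show ?thesis by (simp add: sum.distrib sum_inner)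
  qed
  have s4: "(\<Sum>i\<in>Basis. dF3 p t i x v) = p * (R * \<mu>) * W * (v \<bullet> MV) + (p - 1) * (R * \<mu> * \<mu>) * W * (v \<bullet> v) + real DIM('a) * (R * \<mu> * \<mu>) * W"
  proof -
    have "(\<Sum>i\<in>Basis. dF3 p t i x v) = (\<Sum>i\<in>Basis. (p * (R * \<mu>) * W) * ((v \<bullet> i) * (MV \<bullet> i)) + ((p - 1) * (R * \<mu> * \<mu>) * W) * ((v \<bullet> i) * (v \<bullet> i)) + (R * \<mu> * \<mu>) * W)"
      by (rule sum.cong) (auto simp: dF3_def Q P W_def MV_def algebra_simps)
    then show ?thesis by (simp add: sum.distrib sum_inner)
  qed
  have s5: "(\<Sum>i\<in>Basis. dF4 p t i x v) = (p - 1) * R * W * (MV \<bullet> MV) + (p - 1) * (R * \<mu>) * W * (v \<bullet> MV) + (R * \<mu>) * W * Tr"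
  proof -
    have "(\<Sum>i\<in>Basis. dF4 p t i x v) = (\<Sum>i\<in>Basis. ((p - 1) * R * W) * ((MV \<bullet> i) * (MV \<bullet> i)) + ((p - 1) * (R * \<mu>) * W) * ((v \<bullet> i) * (MV \<bullet> i)) + ((R * \<mu>) * W) * (mvv t x v i \<bullet> i))"
      by (rule sum.cong) (auto simp: dF4_def Q R_def W_def MV_def algebra_simps)
    then show ?thesis by (simp add: sum.distrib sum_inner Tr_def sum_distrib_left)
  qed
  have Sum: "Sum p t x v = - \<gamma> * (p * (R * \<mu>) * W * (v \<bullet> MX) + (p - 1) * (R * \<mu> * \<mu>) * W * (g \<bullet> v))
      + \<gamma> * (p * (R * \<mu>) * W * (g \<bullet> MV) + (p - 1) * (R * \<mu> * \<mu>) * W * (g \<bullet> v))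
      + \<gamma> * p * (p * (R * \<mu>) * W * (b \<bullet> MV) + (p - 1) * (R * \<mu> * \<mu>) * W * (b \<bullet> v))
      + \<gamma>\<^sup>2 * p * (p * (R * \<mu>) * W * (v \<bullet> MV) + (p - 1) * (R * \<mu> * \<mu>) * W * (v \<bullet> v) + real DIM('a) * (R * \<mu> * \<mu>) * W)
      + \<gamma>\<^sup>2 * p * ((p - 1) * R * W * (MV \<bullet> MV) + (p - 1) * (R * \<mu>) * W * (v \<bullet> MV) + (R * \<mu>) * W * Tr)"
    unfolding Sum_def sum.distrib sum_distrib_left[symmetric] s1 s2 s3 s4 s5 by simp
  have mteq: "mt t x v = \<gamma>\<^sup>2 * Tr - \<gamma> * (v \<bullet> MX) - \<gamma> * (- (g \<bullet> MV) - (b \<bullet> MV) - \<gamma> * (v \<bullet> MV) - \<gamma> * real DIM('a) * \<mu>)"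
    using eq[rule_format, OF t, of x v]
    by (simp add: Tr_def MX_def MV_def g_def b_def \<mu>_def force_def bb_def inner_diff_left algebra_simps)
  have main: "p * (QQ p t x v * mt t x v) * w p x v * 1 * 1 - Sum p t x v
      = - p * (p - 1) * W * (\<gamma>\<^sup>2 * R * ((MV \<bullet> MV) + 2 * \<mu> * (v \<bullet> MV) + \<mu> * \<mu> * (v \<bullet> v)) + \<gamma> * (R * \<mu>) * ((b \<bullet> MV) + \<mu> * (b \<bullet> v)))"
    unfolding Sum mteq Q W_def[symmetric] by algebra
  define G where "G = MV + \<mu> *\<^sub>R v"
  have Rnn: "R \<ge> 0" using mnn[OF t p, of x v] by (auto simp: R_def RR_def)
  have sq: "0 \<le> (\<gamma> *\<^sub>R G + (\<mu> / 2) *\<^sub>R b) \<bullet> (\<gamma> *\<^sub>R G + (\<mu> / 2) *\<^sub>R b)" by simp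
  have exp: "(\<gamma> *\<^sub>R G + (\<mu> / 2) *\<^sub>R b) \<bullet> (\<gamma> *\<^sub>R G + (\<mu> / 2) *\<^sub>R b)
     = \<gamma>\<^sup>2 * ((MV \<bullet> MV) + 2 * \<mu> * (v \<bullet> MV) + \<mu> * \<mu> * (v \<bullet> v)) + \<gamma> * \<mu> * ((b \<bullet> MV) + \<mu> * (b \<bullet> v)) + \<mu> * \<mu> / 4 * (b \<bullet> b)"
    unfolding G_def by (simp add: inner_add_left inner_add_right inner_commute algebra_simps power2_eq_square)
  have "0 \<le> p * (p - 1) * W * (R * ((\<gamma> *\<^sub>R G + (\<mu> / 2) *\<^sub>R b) \<bullet> (\<gamma> *\<^sub>R G + (\<mu> / 2) *\<^sub>R b)))"
    using p Rnn sq w_pos[of p x v] unfolding W_def by (intro mult_nonneg_nonneg) auto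
  then have nn: "0 \<le> p * (p - 1) * W * (R * (\<gamma>\<^sup>2 * ((MV \<bullet> MV) + 2 * \<mu> * (v \<bullet> MV) + \<mu> * \<mu> * (v \<bullet> v)) + \<gamma> * \<mu> * ((b \<bullet> MV) + \<mu> * (b \<bullet> v)) + \<mu> * \<mu> / 4 * (b \<bullet> b)))"
    unfolding exp .
  have id: "p * (p - 1) / 4 * (norm b)\<^sup>2 * (R * \<mu> * \<mu> * W * 1 * 1)
     - (- p * (p - 1) * W * (\<gamma>\<^sup>2 * R * ((MV \<bullet> MV) + 2 * \<mu> * (v \<bullet> MV) + \<mu> * \<mu> * (v \<bullet> v)) + \<gamma> * (R * \<mu>) * ((b \<bullet> MV) + \<mu> * (b \<bullet> v))))
     = p * (p - 1) * W * (R * (\<gamma>\<^sup>2 * ((MV \<bullet> MV) + 2 * \<mu> * (v \<bullet> MV) + \<mu> * \<mu> * (v \<bullet> v)) + \<gamma> * \<mu> * ((b \<bullet> MV) + \<mu> * (b \<bullet> v)) + \<mu> * \<mu> / 4 * (b \<bullet> b)))"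
    unfolding power2_norm_eq_inner by algebra
  show ?thesis using main nn id unfolding P W_def b_def by linarith
qed

lemma int_I: "integrable lborel (\<lambda>z. p * (QQ p t (fst z) (snd z) * mt t (fst z) (snd z)) * w p (fst z) (snd z) * 1 * 1)"
proof -
  have h: "integrable lborel (\<lambda>z. QQ p t (fst z) (snd z) * mt t (fst z) (snd z) * w p (fst z) (snd z) * 1 * 1)"
    by (rule atom_int[OF t p, where U="\<lambda>x v. QQ p t x v * mt t x v" and a="\<lambda>x v. 1" and c="\<lambda>x v. 1" and Ka=1 and Kc=1])
      (use b_QX[OF t p b_mt[OF t p]] pf1_m[OF t p] pf1_b[OF t p] in \<open>auto intro!: borel_measurable_continuous_onI continuous_on_mult c_all'\<close>)
  show ?thesis using Bochner_Integration.integrable_mult_right[OF h, of p] by (simp add: mult.assoc)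
qed

lemma int_Pw: "integrable lborel (\<lambda>z. PP p t (fst z) (snd z) * w p (fst z) (snd z) * 1 * 1)"
  by (rule atom_int[OF t p, where U="\<lambda>x v. PP p t x v" and a="\<lambda>x v. 1" and c="\<lambda>x v. 1" and Ka=1 and Kc=1])
      (use b_P[OF t p] pf1_m[OF t p] pf1_b[OF t p] in \<open>auto intro!: borel_measurable_continuous_onI c_all'\<close>)

lemma Sum_int_zero: "integrable lborel (\<lambda>z. Sum p t (fst z) (snd z))" "(\<integral>z. Sum p t (fst z) (snd z) \<partial>lborel) = 0"
proof -
  have m: "(\<lambda>z::'a\<times>'a. gPhi (fst z) \<bullet> i) \<in> borel_measurable lborel" for i by (rule meas_of_cont[OF t p c_g[OF t p]])
  let ?f = "\<lambda>i z. - \<gamma> * dF1 p t i (fst z) (snd z) + \<gamma> * dF2 p t i (\<lambda>x. gPhi x \<bullet> i) (fst z) (snd z)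
    + \<gamma> * p * dF2 p t i (\<lambda>x. bb t x \<bullet> i) (fst z) (snd z) + \<gamma>\<^sup>2 * p * dF3 p t i (fst z) (snd z) + \<gamma>\<^sup>2 * p * dF4 p t i (fst z) (snd z)"
  have fi: "integrable lborel (?f i)" if i: "i \<in> Basis" for i
    by (intro Bochner_Integration.integrable_add Bochner_Integration.integrable_mult_right
        int_dF1'[OF i] int_dF2'[OF i m pfg_b'[OF i] cPhi_nonneg] int_dF2'[OF i bbi_meas[OF t p] bbi_AE'[OF i] c0_nn[OF t p]] int_dF3'[OF i] int_dF4'[OF i])
  have f0: "integral\<^sup>L lborel (?f i) = 0" if i: "i \<in> Basis" for i
  proof -
    note I = int_dF1'[OF i] int_dF2'[OF i m pfg_b'[OF i] cPhi_nonneg] int_dF2'[OF i bbi_meas[OF t p] bbi_AE'[OF i] c0_nn[OF t p]] int_dF3'[OF i] int_dF4'[OF i]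
    show ?thesis
      by (simp add: I Z1[OF i] Z2g[OF i] Z2b[OF i] Z3[OF i] Z4[OF i])
  qed
  have eq: "(\<lambda>z. Sum p t (fst z) (snd z)) = (\<lambda>z. \<Sum>i\<in>Basis. ?f i z)" by (simp add: Sum_def fun_eq_iff)
  show "integrable lborel (\<lambda>z. Sum p t (fst z) (snd z))" unfolding eq by (intro Bochner_Integration.integrable_sum fi)
  show "(\<integral>z. Sum p t (fst z) (snd z) \<partial>lborel) = 0"
  proof -
    have "(\<integral>z. (\<Sum>i\<in>Basis. ?f i z) \<partial>lborel) = (\<Sum>i\<in>Basis. integral\<^sup>L lborel (?f i))"
      by (rule Bochner_Integration.integral_sum) (rule fi)
    also have "\<dots> = 0" by (rule sum.neutral) (use f0 in blast)
    finally show ?thesis by (simp only: Sum_def)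
  qed
qed

lemma space_ineq:
  "(\<integral>z. p * (QQ p t (fst z) (snd z) * mt t (fst z) (snd z)) * w p (fst z) (snd z) * 1 * 1 \<partial>lborel)
    \<le> p * (p - 1) / 4 * c0\<^sup>2 * (\<integral>z. PP p t (fst z) (snd z) * w p (fst z) (snd z) * 1 * 1 \<partial>lborel)"
proof -
  let ?I = "\<lambda>z. p * (QQ p t (fst z) (snd z) * mt t (fst z) (snd z)) * w p (fst z) (snd z) * 1 * 1"
  let ?S = "\<lambda>z. Sum p t (fst z) (snd z)"
  let ?P = "\<lambda>z. PP p t (fst z) (snd z) * w p (fst z) (snd z) * 1 * 1"
  have "integral\<^sup>L lborel ?I = integral\<^sup>L lborel (\<lambda>z. ?I z - ?S z)"
    using Sum_int_zero int_I by (simp add: Bochner_Integration.integral_diff)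
  also have "\<dots> \<le> integral\<^sup>L lborel (\<lambda>z. p * (p - 1) / 4 * c0\<^sup>2 * ?P z)"
  proof (rule integral_mono_AE)
    show "integrable lborel (\<lambda>z. ?I z - ?S z)" using Sum_int_zero int_I by auto
    show "integrable lborel (\<lambda>z. p * (p - 1) / 4 * c0\<^sup>2 * ?P z)" using int_Pw by auto
    show "AE z in lborel. ?I z - ?S z \<le> p * (p - 1) / 4 * c0\<^sup>2 * ?P z"
      using bb_AE[OF t p]
    proof eventually_elim
      case (elim z)
      have Pnn: "0 \<le> ?P z" using w_pos[of p "fst z" "snd z"] by (simp add: PP_def)
      have "(norm (bb t (fst z)))\<^sup>2 \<le> c0\<^sup>2" using elim by (simp add: power_mono)
      then have "p * (p - 1) / 4 * (norm (bb t (fst z)))\<^sup>2 * ?P z \<le> p * (p - 1) / 4 * c0\<^sup>2 * ?P z"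
        using p Pnn by (intro mult_right_mono mult_left_mono) auto
      then show ?case using pointwise[of "fst z" "snd z"] by linarith
    qed
  qed
  also have "\<dots> = p * (p - 1) / 4 * c0\<^sup>2 * integral\<^sup>L lborel ?P" by simp
  finally show ?thesis .
qed

end
end


context vfp begin

definition FF where "FF p s = (\<integral>z. PP p s (fst z) (snd z) * w p (fst z) (snd z) \<partial>lborel)"
definition DD where "DD p s = (\<integral>z. p * (QQ p s (fst z) (snd z) * mt s (fst z) (snd z)) * w p (fst z) (snd z) \<partial>lborel)"

context
  fixes p :: real
  assumes p: "p \<ge> 2"
begin

lemma DD_le: assumes s: "s \<in> {0..T}" shows "DD p s \<le> p * (p - 1) / 4 * c0\<^sup>2 * FF p s"
  using space_ineq[OF s p] by (simp add: DD_def FF_def)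

lemma time_deriv:
  assumes s: "s \<in> {0..T}"
  shows "((\<lambda>s. PP p s x v * w p x v) has_real_derivative (p * (QQ p s x v * mt s x v) * w p x v)) (at s within {0..T})"
proof -
  have "((\<lambda>s. m s x v powr p) has_real_derivative (p * m s x v powr (p - 1) * mt s x v)) (at s within {0..T})"
    by (rule powr_deriv_gt1) (use dt s nonneg p in auto)
  from DERIV_mult[OF this DERIV_const[of "w p x v"]] show ?thesis
    by (simp add: PP_def QQ_def algebra_simps)
qed

lemma cD: "continuous_on ({0..T} \<times> UNIV) (\<lambda>y. p * (QQ p (fst y) (fst (snd y)) (snd (snd y)) * mt (fst y) (fst (snd y)) (snd (snd y))) * w p (fst (snd y)) (snd (snd y)))"
proof -
  have c1: "continuous_on ({0..T} \<times> UNIV) (\<lambda>y. m (fst y) (fst (snd y)) (snd (snd y)))"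
    using cm by (simp add: case_prod_beta)
  have c2: "continuous_on ({0..T} \<times> UNIV) (\<lambda>y. mt (fst y) (fst (snd y)) (snd (snd y)))"
    using cmt by (simp add: case_prod_beta)
  have T0: "0 \<in> {0..T}" using T_nonneg by simp
  have c3: "continuous_on ({0..T} \<times> UNIV) (\<lambda>y::real \<times> 'a \<times> 'a. w p (fst (snd y)) (snd (snd y)))"
    by (rule continuous_on_compose2[OF c_w[OF T0 p], where f=snd]) (auto intro!: continuous_intros)
  have c4: "continuous_on ({0..T} \<times> UNIV) (\<lambda>y. QQ p (fst y) (fst (snd y)) (snd (snd y)))"
    unfolding QQ_def by (rule continuous_on_powr'[OF c1 continuous_on_const]) (use nonneg p in auto)
  show ?thesis by (intro continuous_on_mult continuous_on_const c2 c3 c4)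
qed

lemma time_ftc:
  assumes t: "t \<in> {0..T}"
  shows "PP p t x v * w p x v - PP p 0 x v * w p x v
    = (\<integral>s. indicator {0..t} s * (p * (QQ p s x v * mt s x v) * w p x v) \<partial>lborel)"
proof -
  have sub: "{0..t} \<subseteq> {0..T}" using t by auto
  have c: "continuous_on {0..t} (\<lambda>s. p * (QQ p s x v * mt s x v) * w p x v)"
  proof -
    have "continuous_on {0..t} ((\<lambda>y. p * (QQ p (fst y) (fst (snd y)) (snd (snd y)) * mt (fst y) (fst (snd y)) (snd (snd y))) * w p (fst (snd y)) (snd (snd y))) \<circ> (\<lambda>s. (s, x, v)))"
      by (rule continuous_on_compose[OF _ continuous_on_subset[OF cD]]) (use sub in \<open>auto intro!: continuous_intros\<close>)
    then show ?thesis by (simp add: o_def)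
  qed
  have eq: "(LBINT s=ereal 0..ereal t. p * (QQ p s x v * mt s x v) * w p x v) = PP p t x v * w p x v - PP p 0 x v * w p x v"
  proof (rule interval_integral_FTC_finite[where F="\<lambda>s. PP p s x v * w p x v"])
    show "continuous_on {min 0 t..max 0 t} (\<lambda>s. p * (QQ p s x v * mt s x v) * w p x v)" using c t by simp
    fix s assume "min 0 t \<le> s" "s \<le> max 0 t"
    then have s: "s \<in> {0..t}" using t by auto
    then have "s \<in> {0..T}" using sub by auto
    from DERIV_subset[OF time_deriv[OF this] sub]
    show "((\<lambda>s. PP p s x v * w p x v) has_vector_derivative p * (QQ p s x v * mt s x v) * w p x v) (at s within {min 0 t..max 0 t})"
      using t by (simp add: has_real_derivative_iff_has_vector_derivative)
  qed
  have t0: "0 \<le> t" using t by simp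
  show ?thesis using eq[unfolded interval_integral_Icc[OF t0] set_lebesgue_integral_def real_scaleR_def] by (rule sym)
qed

lemma intB: assumes s: "s \<in> {0..T}"
  shows "\<bar>p * (QQ p s x v * mt s x v) * w p x v\<bar> \<le> p * gd p 2 (x, v)"
proof -
  have "\<bar>p * (QQ p s x v * mt s x v) * w p x v\<bar> = p * (\<bar>QQ p s x v * mt s x v\<bar> * w p x v)"
    using p w_pos[of p x v] by (simp add: abs_mult)
  also have "\<dots> \<le> p * (MM s x v powr p * w p x v)"
    using p w_pos[of p x v] b_QX[OF s p b_mt[OF s p]] by (intro mult_left_mono mult_right_mono) auto
  also have "\<dots> \<le> p * (NN x v ^ 2 * MM s x v powr p * w p x v)"
  proof -
    have "1 \<le> NN x v ^ 2" using NN_ge1[of x v] by (simp add: one_le_power)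
    moreover have "0 \<le> MM s x v powr p * w p x v" using w_pos[of p x v] by simp
    ultimately have "1 * (MM s x v powr p * w p x v) \<le> NN x v ^ 2 * (MM s x v powr p * w p x v)"
      by (rule mult_right_mono)
    then have "MM s x v powr p * w p x v \<le> NN x v ^ 2 * (MM s x v powr p * w p x v)" by simp
    then show ?thesis using p by (simp add: mult.assoc)
  qed
  also have "\<dots> \<le> p * gd p 2 (x, v)" using b_W[OF s p, of x v] p by simp
  finally show ?thesis .
qed

lemma FF_diff:
  assumes t: "t \<in> {0..T}"
  shows "FF p t - FF p 0 = (\<integral>s. indicator {0..t} s * DD p s \<partial>lborel)"
proof -
  have T0: "0 \<in> {0..T}" using T_nonneg by simp
  have sub: "{0..t} \<subseteq> {0..T}" using t by auto
  define D' where "D' = (\<lambda>y::real \<times> 'a \<times> 'a. p * (QQ p (fst y) (fst (snd y)) (snd (snd y)) * mt (fst y) (fst (snd y)) (snd (snd y))) * w p (fst (snd y)) (snd (snd y)))"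
  define h where "h = (\<lambda>y::real \<times> 'a \<times> 'a. indicator {0..t} (fst y) * D' y)"
  have hm': "h \<in> borel_measurable borel"
  proof -
    have "(\<lambda>y. indicator ({0..t} \<times> UNIV) y *\<^sub>R D' y) \<in> borel_measurable borel"
    proof (rule borel_measurable_continuous_on_indicator)
      show "{0..t} \<times> UNIV \<in> sets borel" by (intro borel_closed closed_Times closed_atLeastAtMost closed_UNIV)
      have "{0..t} \<times> (UNIV :: ('a \<times> 'a) set) \<subseteq> {0..T} \<times> UNIV" using sub by auto
      then show "continuous_on ({0..t} \<times> UNIV) D'"
        by (rule continuous_on_subset[OF cD[unfolded D'_def[symmetric]]])
    qed
    moreover have "(\<lambda>y. indicator ({0..t} \<times> UNIV) y *\<^sub>R D' y) = h"
      by (auto simp: h_def fun_eq_iff indicator_def)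
    ultimately show ?thesis by simp
  qed
  then have hm[measurable]: "h \<in> borel_measurable (lborel \<Otimes>\<^sub>M lborel)"
    by (simp only: lborel_prod measurable_lborel2)
  have PS: "pair_sigma_finite (lborel :: real measure) (lborel :: ('a \<times> 'a) measure)"
    by (rule pair_sigma_finite.intro) (rule sigma_finite_lborel)+
  have gi: "integrable lborel (gd p 2)" using gd(1)[of p 2] p by simp
  have hs: "integrable lborel (\<lambda>z. h (s, z))" for s
  proof (cases "s \<in> {0..t}")
    case True
    then have s: "s \<in> {0..T}" using sub by auto
    have "integrable lborel (\<lambda>z. D' (s, z))" using int_I[OF s p] by (simp add: D'_def)
    then show ?thesis using True by (simp add: h_def)
  qed (simp add: h_def)
  have hint: "integrable (lborel \<Otimes>\<^sub>M lborel) h"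
  proof (rule pair_sigma_finite.Fubini_integrable[OF PS])
    show "h \<in> borel_measurable (lborel \<Otimes>\<^sub>M lborel)" by (rule hm)
    show "AE s in lborel. integrable lborel (\<lambda>z. h (s, z))" using hs by simp
    show "integrable lborel (\<lambda>s. \<integral>z. norm (h (s, z)) \<partial>lborel)"
    proof (rule Bochner_Integration.integrable_bound[where f="\<lambda>s. indicator {0..t} s * (p * integral\<^sup>L lborel (gd p 2))"])
      show "integrable lborel (\<lambda>s. indicator {0..t} s * (p * integral\<^sup>L lborel (gd p 2)))"
        using t by (intro Bochner_Integration.integrable_mult_left integrable_real_indicator) auto
      have "(\<lambda>y. norm (h y)) \<in> borel_measurable (lborel \<Otimes>\<^sub>M lborel)" by measurable
      then show "(\<lambda>s. \<integral>z. norm (h (s, z)) \<partial>lborel) \<in> borel_measurable lborel"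
        using lborel.borel_measurable_lebesgue_integral[of "\<lambda>s z. norm (h (s, z))" lborel] by simp
      show "AE s in lborel. norm (\<integral>z. norm (h (s, z)) \<partial>lborel) \<le> norm (indicator {0..t} s * (p * integral\<^sup>L lborel (gd p 2)))"
      proof (rule AE_I2)
        fix s
        show "norm (\<integral>z. norm (h (s, z)) \<partial>lborel) \<le> norm (indicator {0..t} s * (p * integral\<^sup>L lborel (gd p 2)))"
        proof (cases "s \<in> {0..t}")
          case True
          then have s: "s \<in> {0..T}" using sub by auto
          have "(\<integral>z. norm (h (s, z)) \<partial>lborel) \<le> (\<integral>z. p * gd p 2 z \<partial>lborel)"
          proof (rule integral_mono)
            show "integrable lborel (\<lambda>z. norm (h (s, z)))" using hs by auto
            show "integrable lborel (\<lambda>z. p * gd p 2 z)" using gi by auto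
            show "norm (h (s, z)) \<le> p * gd p 2 z" for z
              using True intB[OF s, of "fst z" "snd z"] by (simp add: h_def D'_def)
          qed
          moreover have "0 \<le> (\<integral>z. norm (h (s, z)) \<partial>lborel)" by simp
          ultimately show ?thesis using True p by simp
        qed (simp add: h_def)
      qed
    qed
  qed
  have "(\<integral>z. (\<integral>s. h (s, z) \<partial>lborel) \<partial>lborel) = (\<integral>s. (\<integral>z. h (s, z) \<partial>lborel) \<partial>lborel)"
    using pair_sigma_finite.Fubini_integral[OF PS, of "\<lambda>s z. h (s, z)"] hint by simp
  moreover have "(\<lambda>z. \<integral>s. h (s, z) \<partial>lborel) = (\<lambda>z. PP p t (fst z) (snd z) * w p (fst z) (snd z) - PP p 0 (fst z) (snd z) * w p (fst z) (snd z))"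
    by (auto simp: fun_eq_iff h_def D'_def time_ftc[OF t])
  moreover have "(\<lambda>s. \<integral>z. h (s, z) \<partial>lborel) = (\<lambda>s. indicator {0..t} s * DD p s)"
    by (auto simp: fun_eq_iff h_def D'_def DD_def)
  moreover have "(\<integral>z. PP p t (fst z) (snd z) * w p (fst z) (snd z) - PP p 0 (fst z) (snd z) * w p (fst z) (snd z) \<partial>lborel) = FF p t - FF p 0"
    using int_Pw[OF t p] int_Pw[OF T0 p] by (simp add: FF_def)
  ultimately show ?thesis by simp
qed

lemma meas_ind_int:
  fixes G :: "real \<times> 'a \<times> 'a \<Rightarrow> real"
  assumes G: "continuous_on ({0..T} \<times> UNIV) G" and t: "t \<in> {0..T}"
  shows "(\<lambda>s. indicator {0..t} s * (\<integral>z. G (s, z) \<partial>lborel)) \<in> borel_measurable lborel"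
proof -
  have sub: "{0..t} \<subseteq> {0..T}" using t by auto
  define h where "h = (\<lambda>y::real \<times> 'a \<times> 'a. indicator {0..t} (fst y) * G y)"
  have "h \<in> borel_measurable borel"
  proof -
    have "(\<lambda>y. indicator ({0..t} \<times> UNIV) y *\<^sub>R G y) \<in> borel_measurable borel"
    proof (rule borel_measurable_continuous_on_indicator)
      show "{0..t} \<times> UNIV \<in> sets borel" by (intro borel_closed closed_Times closed_atLeastAtMost closed_UNIV)
      have "{0..t} \<times> (UNIV :: ('a \<times> 'a) set) \<subseteq> {0..T} \<times> UNIV" using sub by auto
      then show "continuous_on ({0..t} \<times> UNIV) G" by (rule continuous_on_subset[OF G])
    qed
    moreover have "(\<lambda>y. indicator ({0..t} \<times> UNIV) y *\<^sub>R G y) = h"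
      by (auto simp: h_def fun_eq_iff indicator_def)
    ultimately show ?thesis by simp
  qed
  then have hm[measurable]: "h \<in> borel_measurable (lborel \<Otimes>\<^sub>M lborel)"
    by (simp only: lborel_prod measurable_lborel2)
  have "(\<lambda>s. \<integral>z. h (s, z) \<partial>lborel) \<in> borel_measurable lborel"
    using lborel.borel_measurable_lebesgue_integral[of "\<lambda>s z. h (s, z)" lborel] by simp
  moreover have "(\<lambda>s. \<integral>z. h (s, z) \<partial>lborel) = (\<lambda>s. indicator {0..t} s * (\<integral>z. G (s, z) \<partial>lborel))"
    by (auto simp: h_def fun_eq_iff)
  ultimately show ?thesis by simp
qed

lemma cPw: "continuous_on ({0..T} \<times> UNIV) (\<lambda>y. PP p (fst y) (fst (snd y)) (snd (snd y)) * w p (fst (snd y)) (snd (snd y)))"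
proof -
  have c1: "continuous_on ({0..T} \<times> UNIV) (\<lambda>y. m (fst y) (fst (snd y)) (snd (snd y)))"
    using cm by (simp add: case_prod_beta)
  have T0: "0 \<in> {0..T}" using T_nonneg by simp
  have c3: "continuous_on ({0..T} \<times> UNIV) (\<lambda>y::real \<times> 'a \<times> 'a. w p (fst (snd y)) (snd (snd y)))"
    by (rule continuous_on_compose2[OF c_w[OF T0 p], where f=snd]) (auto intro!: continuous_intros)
  have c4: "continuous_on ({0..T} \<times> UNIV) (\<lambda>y. PP p (fst y) (fst (snd y)) (snd (snd y)))"
    unfolding PP_def by (rule continuous_on_powr'[OF c1 continuous_on_const]) (use nonneg p in auto)
  show ?thesis by (intro continuous_on_mult c3 c4)
qed

lemma DD_meas: "t \<in> {0..T} \<Longrightarrow> (\<lambda>s. indicator {0..t} s * DD p s) \<in> borel_measurable lborel"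
  using meas_ind_int[OF cD] by (simp add: DD_def)

lemma FF_meas: "t \<in> {0..T} \<Longrightarrow> (\<lambda>s. indicator {0..t} s * FF p s) \<in> borel_measurable lborel"
  using meas_ind_int[OF cPw] by (simp add: FF_def)

definition "BB = p * integral\<^sup>L lborel (gd p 2)"
definition "BF = integral\<^sup>L lborel (gd p 2)"

lemma DD_bound: assumes s: "s \<in> {0..T}" shows "\<bar>DD p s\<bar> \<le> BB"
proof -
  have gi: "integrable lborel (gd p 2)" using gd(1)[of p 2] p by simp
  have "\<bar>DD p s\<bar> \<le> (\<integral>z. \<bar>p * (QQ p s (fst z) (snd z) * mt s (fst z) (snd z)) * w p (fst z) (snd z)\<bar> \<partial>lborel)"
    unfolding DD_def by (rule integral_abs_bound)
  also have "\<dots> \<le> (\<integral>z. p * gd p 2 z \<partial>lborel)"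
  proof (rule integral_mono)
    show "integrable lborel (\<lambda>z. \<bar>p * (QQ p s (fst z) (snd z) * mt s (fst z) (snd z)) * w p (fst z) (snd z)\<bar>)"
      using int_I[OF s p] by simp
    show "integrable lborel (\<lambda>z. p * gd p 2 z)" using gi by simp
    show "\<bar>p * (QQ p s (fst z) (snd z) * mt s (fst z) (snd z)) * w p (fst z) (snd z)\<bar> \<le> p * gd p 2 z" for z
      using intB[OF s, of "fst z" "snd z"] by simp
  qed
  finally show ?thesis by (simp add: BB_def)
qed

lemma FF_bound: assumes s: "s \<in> {0..T}" shows "0 \<le> FF p s" "FF p s \<le> BF"
proof -
  have gi: "integrable lborel (gd p 2)" using gd(1)[of p 2] p by simp
  show "0 \<le> FF p s" unfolding FF_def
    by (rule Bochner_Integration.integral_nonneg) (use w_pos in \<open>auto simp: PP_def less_imp_le\<close>)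
  show "FF p s \<le> BF" unfolding FF_def BF_def
  proof (rule integral_mono)
    show "integrable lborel (\<lambda>z. PP p s (fst z) (snd z) * w p (fst z) (snd z))" using int_Pw[OF s p] by simp
    show "integrable lborel (gd p 2)" by (rule gi)
    fix z :: "'a \<times> 'a"
    obtain x v where z: "z = (x, v)" by fastforce
    have "PP p s x v * w p x v \<le> MM s x v powr p * w p x v"
      using b_P[OF s p, of x v] w_pos[of p x v] by (intro mult_right_mono) auto
    also have "\<dots> \<le> NN x v ^ 2 * MM s x v powr p * w p x v"
    proof -
      have "1 \<le> NN x v ^ 2" using NN_ge1[of x v] by (simp add: one_le_power)
      moreover have "0 \<le> MM s x v powr p * w p x v" using w_pos[of p x v] by simp
      ultimately have "1 * (MM s x v powr p * w p x v) \<le> NN x v ^ 2 * (MM s x v powr p * w p x v)"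
        by (rule mult_right_mono)
      then show ?thesis by (simp add: mult.assoc)
    qed
    also have "\<dots> \<le> gd p 2 (x, v)" by (rule b_W[OF s p])
    finally show "PP p s (fst z) (snd z) * w p (fst z) (snd z) \<le> gd p 2 z" using z by simp
  qed
qed

lemma ind_int:
  fixes f :: "real \<Rightarrow> real"
  assumes m: "(\<lambda>s. indicator {0..t} s * f s) \<in> borel_measurable lborel"
    and b: "\<And>s. s \<in> {0..t} \<Longrightarrow> \<bar>f s\<bar> \<le> K" and t: "t \<ge> 0"
  shows "integrable lborel (\<lambda>s. indicator {0..t} s * f s)"
proof (rule Bochner_Integration.integrable_bound[where f="\<lambda>s. indicator {0..t} s * K"])
  show "integrable lborel (\<lambda>s. indicator {0..t} s * K)"
    using t by (intro Bochner_Integration.integrable_mult_left integrable_real_indicator) auto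
  show "AE s in lborel. norm (indicator {0..t} s * f s) \<le> norm (indicator {0..t} s * K)"
    using b by (intro AE_I2) (force simp: indicator_def)
qed (rule m)

lemma int_indDD: "t \<in> {0..T} \<Longrightarrow> integrable lborel (\<lambda>s. indicator {0..t} s * DD p s)"
  by (rule ind_int[OF DD_meas]) (auto intro: DD_bound)

lemma int_indFF: "t \<in> {0..T} \<Longrightarrow> integrable lborel (\<lambda>s. indicator {0..t} s * FF p s)"
proof (rule ind_int[OF FF_meas])
  fix s assume "t \<in> {0..T}" "s \<in> {0..t}"
  then have s: "s \<in> {0..T}" by auto
  show "\<bar>FF p s\<bar> \<le> BF" using FF_bound[OF s] by simp
qed auto

lemma FF_ineq:
  assumes t: "t \<in> {0..T}"
  shows "FF p t \<le> FF p 0 + p * (p - 1) * c0\<^sup>2 / 2 * (\<integral>s. indicator {0..t} s * FF p s \<partial>lborel)"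
proof -
  have "FF p t - FF p 0 = (\<integral>s. indicator {0..t} s * DD p s \<partial>lborel)" by (rule FF_diff[OF t])
  also have "\<dots> \<le> (\<integral>s. p * (p - 1) / 4 * c0\<^sup>2 * (indicator {0..t} s * FF p s) \<partial>lborel)"
  proof (rule integral_mono)
    show "integrable lborel (\<lambda>s. indicator {0..t} s * DD p s)" by (rule int_indDD[OF t])
    show "integrable lborel (\<lambda>s. p * (p - 1) / 4 * c0\<^sup>2 * (indicator {0..t} s * FF p s))"
      using int_indFF[OF t] by simp
    fix s
    show "indicator {0..t} s * DD p s \<le> p * (p - 1) / 4 * c0\<^sup>2 * (indicator {0..t} s * FF p s)"
    proof (cases "s \<in> {0..t}")
      case True
      then have "s \<in> {0..T}" using t by auto
      then show ?thesis using True DD_le by simp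
    qed simp
  qed
  also have "\<dots> = p * (p - 1) / 4 * c0\<^sup>2 * (\<integral>s. indicator {0..t} s * FF p s \<partial>lborel)" by simp
  also have "\<dots> \<le> p * (p - 1) * c0\<^sup>2 / 2 * (\<integral>s. indicator {0..t} s * FF p s \<partial>lborel)"
  proof (rule mult_right_mono)
    show "0 \<le> (\<integral>s. indicator {0..t} s * FF p s \<partial>lborel)"
    proof (rule Bochner_Integration.integral_nonneg)
      fix s show "0 \<le> indicator {0..t} s * FF p s"
        using FF_bound(1)[of s] t by (cases "s \<in> {0..t}") auto
    qed
    show "p * (p - 1) / 4 * c0\<^sup>2 \<le> p * (p - 1) * c0\<^sup>2 / 2" using p by simp
  qed
  finally show ?thesis by simp
qed

lemma BB_nn: "0 \<le> BB"
proof -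
  have "0 \<in> {0..T}" using T_nonneg by simp
  from DD_bound[OF this] show ?thesis by simp
qed

lemma FF_lip:
  assumes t1: "t1 \<in> {0..T}" and t2: "t2 \<in> {0..T}" and le: "t1 \<le> t2"
  shows "\<bar>FF p t2 - FF p t1\<bar> \<le> BB * (t2 - t1)"
proof -
  have "FF p t2 - FF p t1 = (\<integral>s. indicator {0..t2} s * DD p s \<partial>lborel) - (\<integral>s. indicator {0..t1} s * DD p s \<partial>lborel)"
    using FF_diff[OF t1] FF_diff[OF t2] by simp
  also have "\<dots> = (\<integral>s. indicator {0..t2} s * DD p s - indicator {0..t1} s * DD p s \<partial>lborel)"
    using int_indDD[OF t1] int_indDD[OF t2] by simp
  also have "\<dots> = (\<integral>s. indicator {t1<..t2} s * DD p s \<partial>lborel)"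
    by (rule Bochner_Integration.integral_cong) (use t1 le in \<open>auto simp: indicator_def\<close>)
  finally have eq: "FF p t2 - FF p t1 = (\<integral>s. indicator {t1<..t2} s * DD p s \<partial>lborel)" .
  have int: "integrable lborel (\<lambda>s. indicator {t1<..t2} s * DD p s)"
  proof -
    have "integrable lborel (\<lambda>s. indicator {0..t2} s * DD p s - indicator {0..t1} s * DD p s)"
      using int_indDD[OF t1] int_indDD[OF t2] by simp
    moreover have "(\<lambda>s. indicator {0..t2} s * DD p s - indicator {0..t1} s * DD p s) = (\<lambda>s. indicator {t1<..t2} s * DD p s)"
      using t1 le by (auto simp: indicator_def fun_eq_iff)
    ultimately show ?thesis by simp
  qed
  have "\<bar>\<integral>s. indicator {t1<..t2} s * DD p s \<partial>lborel\<bar> \<le> (\<integral>s. \<bar>indicator {t1<..t2} s * DD p s\<bar> \<partial>lborel)"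
    by (rule integral_abs_bound)
  also have "\<dots> \<le> (\<integral>s. indicator {t1<..t2} s * BB \<partial>lborel)"
  proof (rule integral_mono)
    show "integrable lborel (\<lambda>s. \<bar>indicator {t1<..t2} s * DD p s\<bar>)" using int by simp
    show "integrable lborel (\<lambda>s. indicator {t1<..t2} s * BB)"
      using le by (intro Bochner_Integration.integrable_mult_left integrable_real_indicator) auto
    fix s show "\<bar>indicator {t1<..t2} s * DD p s\<bar> \<le> indicator {t1<..t2} s * BB"
    proof (cases "s \<in> {t1<..t2}")
      case True
      then have "s \<in> {0..T}" using t1 t2 by auto
      then show ?thesis using True DD_bound by simp
    qed simp
  qed
  also have "\<dots> = BB * (t2 - t1)" using le by simp
  finally show ?thesis unfolding eq .
qed

lemma FF_cont: "continuous_on {0..T} (FF p)"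
proof (rule lipschitz_on_continuous_on)
  show "BB-lipschitz_on {0..T} (FF p)"
  proof (rule lipschitz_onI)
    fix x y assume x: "x \<in> {0..T}" and y: "y \<in> {0..T}"
    show "dist (FF p x) (FF p y) \<le> BB * dist x y"
    proof (cases "x \<le> y")
      case True
      then show ?thesis using FF_lip[OF x y True] by (simp add: dist_real_def abs_minus_commute)
    next
      case False
      then show ?thesis using FF_lip[OF y x] by (simp add: dist_real_def)
    qed
  qed (rule BB_nn)
qed

lemma FF_henstock: assumes t: "t \<in> {0..T}"
  shows "(\<integral>s. indicator {0..t} s * FF p s \<partial>lborel) = integral {0..t} (FF p)"
proof -
  have "set_integrable lborel {0..t} (FF p)"
    unfolding set_integrable_def using int_indFF[OF t] by simp
  from set_borel_integral_eq_integral(2)[OF this] show ?thesis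
    by (simp add: set_lebesgue_integral_def)
qed

lemma gronwall: assumes t: "t \<in> {0..T}"
  shows "FF p t \<le> FF p 0 * exp (p * (p - 1) * c0\<^sup>2 / 2 * t)"
proof -
  define C where "C = p * (p - 1) * c0\<^sup>2 / 2"
  have C: "C \<ge> 0" using p by (simp add: C_def)
  define I where "I = (\<lambda>u. integral {0..u} (FF p))"
  define G where "G = (\<lambda>u. exp (- C * u) * (FF p 0 + C * I u))"
  have ineq: "FF p u \<le> FF p 0 + C * I u" if "u \<in> {0..T}" for u
    using FF_ineq[OF that] FF_henstock[OF that] by (simp add: C_def I_def)
  have Icont: "continuous_on {0..T} I"
    unfolding I_def by (rule indefinite_integral_continuous_1[OF integrable_continuous_interval[OF FF_cont]])
  have Gcont: "continuous_on {0..t} G"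
    unfolding G_def using t
    by (intro continuous_intros continuous_on_subset[OF Icont]) auto
  have "G t \<le> G 0"
  proof (rule DERIV_nonpos_imp_decreasing_open[of 0 t G])
    show "0 \<le> t" using t by simp
    show "continuous_on {0..t} G" by (rule Gcont)
    fix u assume u: "0 < u" "u < t"
    then have uT: "u \<in> {0..T}" and ui: "0 < u" "u < T" using t by auto
    have dI: "(I has_real_derivative FF p u) (at u)"
    proof -
      have "(I has_vector_derivative FF p u) (at u within {0..T})"
        unfolding I_def by (rule integral_has_vector_derivative[OF FF_cont uT])
      then show ?thesis using at_within_Icc_at[OF ui]
        by (simp add: has_real_derivative_iff_has_vector_derivative)
    qed
    have dG: "(G has_real_derivative (- C * exp (- C * u) * (FF p 0 + C * I u) + exp (- C * u) * (C * FF p u))) (at u)"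
      unfolding G_def by (auto intro!: derivative_eq_intros dI simp: algebra_simps)
    have "- C * exp (- C * u) * (FF p 0 + C * I u) + exp (- C * u) * (C * FF p u)
        = C * exp (- C * u) * (FF p u - (FF p 0 + C * I u))" by (simp add: algebra_simps)
    also have "\<dots> \<le> 0" using ineq[OF uT] C by (intro mult_nonneg_nonpos) auto
    finally show "\<exists>y. (G has_real_derivative y) (at u) \<and> y \<le> 0" using dG by blast
  qed
  moreover have "G 0 = FF p 0" by (simp add: G_def I_def)
  ultimately have "exp (- C * t) * (FF p 0 + C * I t) \<le> FF p 0" unfolding G_def by linarith
  then have "FF p 0 + C * I t \<le> FF p 0 * exp (C * t)"
    by (simp add: exp_minus field_simps)
  then show ?thesis using ineq[OF t] by (simp add: C_def)
qed

end
end


context vfp begin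

lemma Lp_eq:
  assumes s: "s \<in> {0..T}" and p: "p \<ge> 2"
  shows "Lp_eta_pow \<Phi> p (\<lambda>x v. m s x v * exp (Ham \<Phi> x v))
     = ennreal ((2 * pi) powr (- real DIM('a) / 2) * FF p s)"
proof -
  define c where "c = (2 * pi) powr (- real DIM('a) / 2)"
  have c: "c > 0" by (simp add: c_def)
  have cf: "continuous_on UNIV (\<lambda>z::'a\<times>'a. exp (- \<Phi> (fst z)) * (c * exp (- (norm (snd z))\<^sup>2 / 2)))"
    by (intro continuous_intros continuous_on_compose2[OF Phi_cont]) auto
  have fm: "(\<lambda>(x, v). ennreal (exp (- \<Phi> x) * (c * exp (- (norm v)\<^sup>2 / 2)))) \<in> borel_measurable (lborel :: ('a\<times>'a) measure)"
  proof -
    have "(\<lambda>z::'a\<times>'a. exp (- \<Phi> (fst z)) * (c * exp (- (norm (snd z))\<^sup>2 / 2))) \<in> borel_measurable lborel"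
      using borel_measurable_continuous_onI[OF cf] by simp
    then have "(\<lambda>z::'a\<times>'a. ennreal (exp (- \<Phi> (fst z)) * (c * exp (- (norm (snd z))\<^sup>2 / 2)))) \<in> borel_measurable lborel"
      by measurable
    then show ?thesis by (simp add: case_prod_beta)
  qed
  have cg: "continuous_on UNIV (\<lambda>z. \<bar>m s (fst z) (snd z) * exp (Ham \<Phi> (fst z) (snd z))\<bar> powr p)"
    unfolding Ham_def
    by (intro continuous_on_powr' continuous_intros c_m[OF s p] continuous_on_compose2[OF Phi_cont]) (use p in auto)
  have gm: "(\<lambda>z. ennreal (\<bar>m s (fst z) (snd z) * exp (Ham \<Phi> (fst z) (snd z))\<bar> powr p)) \<in> borel_measurable lborel"
  proof -
    have "(\<lambda>z. \<bar>m s (fst z) (snd z) * exp (Ham \<Phi> (fst z) (snd z))\<bar> powr p) \<in> borel_measurable lborel"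
      using borel_measurable_continuous_onI[OF cg] by simp
    then show ?thesis by measurable
  qed
  have pt: "ennreal (exp (- \<Phi> x) * (c * exp (- (norm v)\<^sup>2 / 2))) * ennreal (\<bar>m s x v * exp (Ham \<Phi> x v)\<bar> powr p)
      = ennreal (c * (PP p s x v * w p x v))" for x v
  proof -
    have mn: "0 \<le> m s x v" using nonneg s by auto
    have A: "\<bar>m s x v * exp (Ham \<Phi> x v)\<bar> powr p = m s x v powr p * exp (Ham \<Phi> x v * p)"
      using mn by (simp add: abs_mult powr_mult exp_powr_real)
    have B: "exp (- \<Phi> x) * (c * exp (- (norm v)\<^sup>2 / 2)) * exp (Ham \<Phi> x v * p) = c * w p x v"
      unfolding w_def Ham_def by (simp add: exp_add[symmetric] field_simps)
    have C: "exp (- \<Phi> x) * (c * exp (- (norm v)\<^sup>2 / 2)) * (m s x v powr p * exp (Ham \<Phi> x v * p))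
        = (exp (- \<Phi> x) * (c * exp (- (norm v)\<^sup>2 / 2)) * exp (Ham \<Phi> x v * p)) * m s x v powr p"
      by (simp only: mult_ac)
    have D: "ennreal (exp (- \<Phi> x) * (c * exp (- (norm v)\<^sup>2 / 2))) * ennreal (\<bar>m s x v * exp (Ham \<Phi> x v)\<bar> powr p)
      = ennreal (exp (- \<Phi> x) * (c * exp (- (norm v)\<^sup>2 / 2)) * (\<bar>m s x v * exp (Ham \<Phi> x v)\<bar> powr p))"
      by (rule ennreal_mult[symmetric]) (use c in auto)
    show ?thesis unfolding D unfolding A unfolding C unfolding B PP_def by (simp only: mult_ac)
  qed
  have "Lp_eta_pow \<Phi> p (\<lambda>x v. m s x v * exp (Ham \<Phi> x v))
      = (\<integral>\<^sup>+ z. ennreal (c * (PP p s (fst z) (snd z) * w p (fst z) (snd z))) \<partial>lborel)"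
    unfolding Lp_eta_pow_def eta_def c_def[symmetric]
    by (subst nn_integral_density[OF fm gm]) (intro nn_integral_cong, unfold case_prod_beta, rule pt)
  also have "\<dots> = ennreal (\<integral>z. c * (PP p s (fst z) (snd z) * w p (fst z) (snd z)) \<partial>lborel)"
  proof (rule nn_integral_eq_integral)
    show "integrable lborel (\<lambda>z. c * (PP p s (fst z) (snd z) * w p (fst z) (snd z)))"
      using int_Pw[OF s p] by simp
    show "AE z in lborel. 0 \<le> c * (PP p s (fst z) (snd z) * w p (fst z) (snd z))"
      using c w_pos by (intro AE_I2) (simp add: PP_def less_imp_le)
  qed
  also have "\<dots> = ennreal (c * FF p s)" by (simp add: FF_def)
  finally show ?thesis by (simp add: c_def)
qed

lemma LpH_eq:
  assumes s: "s \<in> {0..T}"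
  shows "LpH_norm \<Phi> p (m s) = FF p s powr (1 / p)"
proof -
  have "(\<lambda>z. \<bar>m s (fst z) (snd z)\<bar> powr p * exp ((p - 1) * Ham \<Phi> (fst z) (snd z)))
      = (\<lambda>z. PP p s (fst z) (snd z) * w p (fst z) (snd z))"
    using nonneg s by (auto simp: fun_eq_iff PP_def w_def)
  then show ?thesis by (simp add: LpH_norm_def FF_def)
qed

end
theorem lemma5p3:
  fixes \<Phi> :: "'a::euclidean_space \<Rightarrow> real"
    and gradPhi :: "'a \<Rightarrow> 'a"
    and gradK :: "'a \<Rightarrow> 'a"
    and cPhi c0 T :: real
    and \<mu> :: "real \<Rightarrow> real \<Rightarrow> 'a \<Rightarrow> 'a \<Rightarrow> real"
  assumes Phi_nonneg: "\<forall>x. \<Phi> x \<ge> 0"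
    and Phi_loc_lip: "\<forall>x. \<exists>e>0. \<exists>L. L-lipschitz_on (ball x e) \<Phi>"
    and Phi_grad: "\<forall>x. (\<Phi> has_derivative (\<lambda>h. gradPhi x \<bullet> h)) (at x)"
    and Phi_grad_growth: "\<forall>x. norm (gradPhi x) \<le> cPhi * (1 + norm x)"
    and Phi_grad_lip: "cPhi-lipschitz_on UNIV gradPhi"
    and Phi_moments: "\<forall>r\<ge>1. \<exists>B. \<forall>x. norm (gradPhi x) powr r * exp (- \<Phi> x) \<le> B"
    and gradK_meas: "gradK \<in> borel_measurable borel"
    and T_nonneg: "T \<ge> 0"
    and sol: "\<forall>\<gamma>>0. regular_VFP_solution \<Phi> gradPhi gradK \<gamma> T (\<mu> \<gamma>)"
    and c0_bound: "\<forall>\<gamma>>0. \<forall>t\<in>{0..T}. AE x in lborel.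
         integrable lborel (\<lambda>y. xmarg (\<mu> \<gamma> t) y *\<^sub>R gradK (x - y)) \<and>
         norm (conv_field gradK (xmarg (\<mu> \<gamma> t)) x) \<le> c0"
  shows "\<forall>\<gamma>>0. \<forall>p\<ge>2. \<forall>t\<in>{0..T}.
     Lp_eta_pow \<Phi> p (\<lambda>x v. \<mu> \<gamma> t x v * exp (Ham \<Phi> x v))
       \<le> Lp_eta_pow \<Phi> p (\<lambda>x v. \<mu> \<gamma> 0 x v * exp (Ham \<Phi> x v))
         + ennreal (p * (p - 1) * c0\<^sup>2 / 2) *
           (\<integral>\<^sup>+ r\<in>{0..t}. Lp_eta_pow \<Phi> p (\<lambda>x v. \<mu> \<gamma> r x v * exp (Ham \<Phi> x v)) \<partial>lborel)
     \<and> LpH_norm \<Phi> p (\<mu> \<gamma> t) \<le> LpH_norm \<Phi> p (\<mu> \<gamma> 0) * exp (c0\<^sup>2 * (p - 1) * t / 2)"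
proof (intro allI impI ballI)
  fix \<gamma> p t :: real
  assume g: "\<gamma> > 0" and p: "p \<ge> 2" and t: "t \<in> {0..T}"
  obtain mt mx mv mvv where S: "(\<forall>t\<in>{0..T}. \<forall>x v. \<mu> \<gamma> t x v \<ge> 0) \<and>
      (\<forall>t\<in>{0..T}. integrable lborel (\<lambda>z::'a\<times>'a. \<mu> \<gamma> t (fst z) (snd z)) \<and>
                   (\<integral> z. \<mu> \<gamma> t (fst z) (snd z) \<partial>lborel) = 1) \<and>
      (\<forall>t\<in>{0..T}. \<forall>x v. ((\<lambda>s. \<mu> \<gamma> s x v) has_real_derivative mt t x v) (at t within {0..T})) \<and>
      (\<forall>t\<in>{0..T}. \<forall>x v. ((\<lambda>y. \<mu> \<gamma> t y v) has_derivative (\<lambda>h. mx t x v \<bullet> h)) (at x)) \<and>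
      (\<forall>t\<in>{0..T}. \<forall>x v. ((\<lambda>w. \<mu> \<gamma> t x w) has_derivative (\<lambda>h. mv t x v \<bullet> h)) (at v)) \<and>
      (\<forall>t\<in>{0..T}. \<forall>x v. ((\<lambda>w. mv t x w) has_derivative mvv t x v) (at v)) \<and>
      continuous_on ({0..T} \<times> UNIV) (\<lambda>(t,x,v). \<mu> \<gamma> t x v) \<and>
      continuous_on ({0..T} \<times> UNIV) (\<lambda>(t,x,v). mt t x v) \<and>
      continuous_on ({0..T} \<times> UNIV) (\<lambda>(t,x,v). mx t x v) \<and>
      continuous_on ({0..T} \<times> UNIV) (\<lambda>(t,x,v). mv t x v) \<and>
      (\<forall>b. continuous_on ({0..T} \<times> UNIV) (\<lambda>(t,x,v). mvv t x v b)) \<and>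
      (\<forall>q\<ge>1. \<forall>k::nat. \<exists>g::'a\<times>'a\<Rightarrow>real. integrable lborel g \<and>
         (\<forall>t\<in>{0..T}. \<forall>x v.
            (1 + norm x + norm v) ^ k *
            (\<bar>\<mu> \<gamma> t x v\<bar> + \<bar>mt t x v\<bar> + norm (mx t x v) + norm (mv t x v)
               + (\<Sum>b\<in>Basis. norm (mvv t x v b))) powr q
            * exp ((q - 1) * Ham \<Phi> x v) \<le> g (x, v))) \<and>
      (\<forall>t\<in>{0..T}. \<forall>x v.
         mt t x v + \<gamma> * (v \<bullet> mx t x v)
         + \<gamma> * ((force gradPhi gradK (xmarg (\<mu> \<gamma> t)) x - \<gamma> *\<^sub>R v) \<bullet> mv t x v
                 - \<gamma> * real DIM('a) * \<mu> \<gamma> t x v)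
         = \<gamma>\<^sup>2 * (\<Sum>b\<in>Basis. mvv t x v b \<bullet> b))"
    using sol[rule_format, OF g] unfolding regular_VFP_solution_def by (elim exE) (erule that)
  interpret V: vfp \<Phi> gradPhi gradK cPhi c0 \<gamma> T "\<mu> \<gamma>" mt mx mv mvv
  proof
    show "\<forall>t\<in>{0..T}. AE x in lborel. integrable lborel (\<lambda>y. xmarg (\<mu> \<gamma> t) y *\<^sub>R gradK (x - y)) \<and>
         norm (conv_field gradK (xmarg (\<mu> \<gamma> t)) x) \<le> c0"
      using c0_bound g by blast
  qed (insert g Phi_grad Phi_grad_growth Phi_grad_lip gradK_meas T_nonneg S, (elim conjE)?, assumption)+
  have T0: "0 \<in> {0..T}" using T_nonneg by simp
  define c where "c = (2 * pi) powr (- real DIM('a) / 2)"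
  have c: "c > 0" by (simp add: c_def)
  define K where "K = p * (p - 1) * c0\<^sup>2 / 2"
  have K: "K \<ge> 0" using p by (simp add: K_def)
  have Lt: "Lp_eta_pow \<Phi> p (\<lambda>x v. \<mu> \<gamma> t x v * exp (Ham \<Phi> x v)) = ennreal (c * V.FF p t)"
    using V.Lp_eq[OF t p] by (simp add: c_def)
  have L0: "Lp_eta_pow \<Phi> p (\<lambda>x v. \<mu> \<gamma> 0 x v * exp (Ham \<Phi> x v)) = ennreal (c * V.FF p 0)"
    using V.Lp_eq[OF T0 p] by (simp add: c_def)
  have II: "(\<integral>\<^sup>+ r\<in>{0..t}. Lp_eta_pow \<Phi> p (\<lambda>x v. \<mu> \<gamma> r x v * exp (Ham \<Phi> x v)) \<partial>lborel)
      = ennreal (c * (\<integral>s. indicator {0..t} s * V.FF p s \<partial>lborel))"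
  proof -
    have "(\<integral>\<^sup>+ r\<in>{0..t}. Lp_eta_pow \<Phi> p (\<lambda>x v. \<mu> \<gamma> r x v * exp (Ham \<Phi> x v)) \<partial>lborel)
        = (\<integral>\<^sup>+ r. ennreal (c * (indicator {0..t} r * V.FF p r)) \<partial>lborel)"
    proof (rule nn_integral_cong)
      fix r :: real
      show "Lp_eta_pow \<Phi> p (\<lambda>x v. \<mu> \<gamma> r x v * exp (Ham \<Phi> x v)) * indicator {0..t} r
          = ennreal (c * (indicator {0..t} r * V.FF p r))"
      proof (cases "r \<in> {0..t}")
        case True
        then have "r \<in> {0..T}" using t by auto
        then show ?thesis using V.Lp_eq[OF _ p, of r] True by (simp add: c_def)
      qed simp
    qed
    also have "\<dots> = ennreal (\<integral>r. c * (indicator {0..t} r * V.FF p r) \<partial>lborel)"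
    proof (rule nn_integral_eq_integral)
      show "integrable lborel (\<lambda>r. c * (indicator {0..t} r * V.FF p r))"
        using V.int_indFF[OF p t] by simp
      show "AE r in lborel. 0 \<le> c * (indicator {0..t} r * V.FF p r)"
      proof (rule AE_I2)
        fix r show "0 \<le> c * (indicator {0..t} r * V.FF p r)"
          using c V.FF_bound(1)[OF p, of r] t by (cases "r \<in> {0..t}") auto
      qed
    qed
    also have "\<dots> = ennreal (c * (\<integral>s. indicator {0..t} s * V.FF p s \<partial>lborel))" by simp
    finally show ?thesis .
  qed
  have Inn: "0 \<le> (\<integral>s. indicator {0..t} s * V.FF p s \<partial>lborel)"
  proof (rule Bochner_Integration.integral_nonneg)
    fix s show "0 \<le> indicator {0..t} s * V.FF p s"
      using V.FF_bound(1)[OF p, of s] t by (cases "s \<in> {0..t}") auto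
  qed
  have F0nn: "0 \<le> V.FF p 0" using V.FF_bound(1)[OF p T0] .
  have Ftnn: "0 \<le> V.FF p t" using V.FF_bound(1)[OF p t] .
  have real_ineq: "c * V.FF p t \<le> c * V.FF p 0 + K * (c * (\<integral>s. indicator {0..t} s * V.FF p s \<partial>lborel))"
    using mult_left_mono[OF V.FF_ineq[OF p t] less_imp_le[OF c]] by (simp add: K_def algebra_simps)
  show "Lp_eta_pow \<Phi> p (\<lambda>x v. \<mu> \<gamma> t x v * exp (Ham \<Phi> x v))
       \<le> Lp_eta_pow \<Phi> p (\<lambda>x v. \<mu> \<gamma> 0 x v * exp (Ham \<Phi> x v))
         + ennreal (p * (p - 1) * c0\<^sup>2 / 2) *
           (\<integral>\<^sup>+ r\<in>{0..t}. Lp_eta_pow \<Phi> p (\<lambda>x v. \<mu> \<gamma> r x v * exp (Ham \<Phi> x v)) \<partial>lborel)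
     \<and> LpH_norm \<Phi> p (\<mu> \<gamma> t) \<le> LpH_norm \<Phi> p (\<mu> \<gamma> 0) * exp (c0\<^sup>2 * (p - 1) * t / 2)"
  proof
    have "ennreal (c * V.FF p t) \<le> ennreal (c * V.FF p 0 + K * (c * (\<integral>s. indicator {0..t} s * V.FF p s \<partial>lborel)))"
      by (rule ennreal_leI[OF real_ineq])
    also have "\<dots> = ennreal (c * V.FF p 0) + ennreal K * ennreal (c * (\<integral>s. indicator {0..t} s * V.FF p s \<partial>lborel))"
      using c K Inn F0nn by (simp add: ennreal_plus ennreal_mult)
    finally show "Lp_eta_pow \<Phi> p (\<lambda>x v. \<mu> \<gamma> t x v * exp (Ham \<Phi> x v))
       \<le> Lp_eta_pow \<Phi> p (\<lambda>x v. \<mu> \<gamma> 0 x v * exp (Ham \<Phi> x v))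
         + ennreal (p * (p - 1) * c0\<^sup>2 / 2) *
           (\<integral>\<^sup>+ r\<in>{0..t}. Lp_eta_pow \<Phi> p (\<lambda>x v. \<mu> \<gamma> r x v * exp (Ham \<Phi> x v)) \<partial>lborel)"
      unfolding Lt L0 II K_def .
  next
    have "LpH_norm \<Phi> p (\<mu> \<gamma> t) = V.FF p t powr (1 / p)" by (rule V.LpH_eq[OF t])
    also have "\<dots> \<le> (V.FF p 0 * exp (K * t)) powr (1 / p)"
      using V.gronwall[OF p t] Ftnn p by (intro powr_mono2) (auto simp: K_def)
    also have "\<dots> = V.FF p 0 powr (1 / p) * exp (K * t) powr (1 / p)"
      using F0nn by (simp add: powr_mult)
    also have "exp (K * t) powr (1 / p) = exp (c0\<^sup>2 * (p - 1) * t / 2)"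
      using p by (simp add: exp_powr_real K_def field_simps)
    also have "V.FF p 0 powr (1 / p) = LpH_norm \<Phi> p (\<mu> \<gamma> 0)" by (rule V.LpH_eq[OF T0, symmetric])
    finally show "LpH_norm \<Phi> p (\<mu> \<gamma> t) \<le> LpH_norm \<Phi> p (\<mu> \<gamma> 0) * exp (c0\<^sup>2 * (p - 1) * t / 2)" .
  qed
qed

end
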